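(* Let $D$ be a delta-matroid on $[n,\overline{n}]$. Then $$U_D(u,v-1)=\sum_{I\text{ independent in }D}u^{n-|I|}v^{a(I)}.$$
   Context: For a finite $E\subseteq\{1,2,3,\dots\}$ let $E\cup\overline{E}$ consist of $E$ and formal copies $\overline{i}$ ($i\in E$), with involution $a\mapsto\overline{a}$; $\overline{S}=\{\overline{a}:a\in S\}$; $[n,\overline{n}]$ denotes this for $E=[n]$. A subset is admissible if it contains at most one of $i,\overline{i}$ for each $i$; $\operatorname{AdS}_n$ is the set of admissible subsets of $[n,\overline{n}]$. In $\mathbb{R}^E$ set $e_{\overline{i}}=-e_i$, $e_S=\sum_{a\in S}e_a$. A delta-matroid on $E\cup\overline{E}$ is a nonempty collection $\mathcal{F}$ of admissible sets of size $|E|$ (feasible sets) such that $\operatorname{Conv}\{e_B:B\in\mathcal{F}\}$ has all edges parallel to some $e_i$ or $e_i\pm e_j$. Rank function: $g_D(S)=\max_{B\in\mathcal{F}}(|S\cap B|-|\overline{S}\cap B|)$. $U_D(u,v)=\sum_{S\in\operatorname{AdS}_n}u^{n-|S|}v^{(|S|-g_D(S))/2}$. An admissible $S$ is independent in $D$ if $g_D(S)=|S|$, equivalently if $S$ is contained in a feasible set. For $A\subseteq[n]$, the projection $D(A)$ is the delta-matroid on $([n]\setminus A)\cup\overline{([n]\setminus A)}$ with feasible sets $B\setminus(A\cup\overline{A})$, $B\in\mathcal{F}$. For $S$ admissible, $\underline{S}\subseteq[n]$ is its unsigned version (image under identifying $i$ with $\overline{i}$). Order $[n]$ by $1<2<\dots<n$.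 For a delta-matroid $D'$ on $E\cup\overline{E}$ and a feasible set $B$ of $D'$: $i\in E$ is $B$-orientable if $B\,\Delta\,\{i,\overline{i}\}$ is not feasible in $D'$; $i$ is $B$-active if it is $B$-orientable and there is no $j\in E$ with $j<i$ such that $B\,\Delta\,\{i,j,\overline{i},\overline{j}\}$ is feasible in $D'$. For $I$ independent in $D$, $I$ is a feasible set of $D([n]\setminus\underline{I})$, and $i\in\underline{I}$ is called $I$-active if $i$ is $I$-active in $D([n]\setminus\underline{I})$; $a(I)$ is the number of $I$-active elements of $\underline{I}$. *)

theory Defs
  imports "HOL-Analysis.Analysis" "HOL-Analysis.Finite_Function_Topology"
begin

(* Elements of E \<union> \<overline>E are encoded as integers: i \<in> E (positive) and its
   bar \<overline>i as -i.  The ground set E is a finite set of positive integers. *)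

definition bar_set :: "int set \<Rightarrow> int set" where
  "bar_set S = uminus ` S"

definition admissible :: "int set \<Rightarrow> int set \<Rightarrow> bool" where
  "admissible E S \<longleftrightarrow> S \<subseteq> E \<union> bar_set E \<and> (\<forall>i. \<not> (i \<in> S \<and> - i \<in> S))"

definition AdS :: "nat \<Rightarrow> int set set" where
  "AdS n = {S. admissible {1..int n} S}"

definition evec1 :: "int \<Rightarrow> (nat \<Rightarrow>\<^sub>0 real)" where
  "evec1 a = of_int (sgn a) *\<^sub>R Poly_Mapping.single (nat \<bar>a\<bar>) 1"

definition evec :: "int set \<Rightarrow> (nat \<Rightarrow>\<^sub>0 real)" where
  "evec S = (\<Sum>a\<in>S. evec1 a)"

definition unit_dir :: "int \<Rightarrow> (nat \<Rightarrow>\<^sub>0 real)" where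
  "unit_dir i = Poly_Mapping.single (nat i) 1"

definition allowed_direction :: "int set \<Rightarrow> (nat \<Rightarrow>\<^sub>0 real) \<Rightarrow> bool" where
  "allowed_direction E d \<longleftrightarrow>
     (\<exists>c::real. \<exists>i\<in>E. d = c *\<^sub>R unit_dir i) \<or>
     (\<exists>c::real. \<exists>i\<in>E. \<exists>j\<in>E. i \<noteq> j \<and>
        (d = c *\<^sub>R (unit_dir i + unit_dir j) \<or> d = c *\<^sub>R (unit_dir i - unit_dir j)))"

(* edges of a polytope P: one-dimensional faces, i.e. faces that are segments [x,y], x \<noteq> y *)
definition delta_matroid :: "int set \<Rightarrow> int set set \<Rightarrow> bool" where
  "delta_matroid E \<F> \<longleftrightarrow>
     finite E \<and> E \<subseteq> {1..} \<and> \<F> \<noteq> {} \<and>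
     (\<forall>B\<in>\<F>. admissible E B \<and> card B = card E) \<and>
     (\<forall>x y. x \<noteq> y \<and> closed_segment x y face_of convex hull (evec ` \<F>)
        \<longrightarrow> allowed_direction E (y - x))"

definition rank_g :: "int set set \<Rightarrow> int set \<Rightarrow> int" where
  "rank_g \<F> S = Max ((\<lambda>B. int (card (S \<inter> B)) - int (card (bar_set S \<inter> B))) ` \<F>)"

definition U_poly :: "nat \<Rightarrow> int set set \<Rightarrow> 'a::comm_ring_1 \<Rightarrow> 'a \<Rightarrow> 'a" where
  "U_poly n \<F> u v = (\<Sum>S\<in>AdS n. u ^ (n - card S) * v ^ nat ((int (card S) - rank_g \<F> S) div 2))"

definition independent :: "nat \<Rightarrow> int set set \<Rightarrow> int set \<Rightarrow> bool" where
  "independent n \<F> S \<longleftrightarrow> S \<in> AdS n \<and> rank_g \<F> S = int (card S)"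

definition proj_feas :: "int set set \<Rightarrow> int set \<Rightarrow> int set set" where
  "proj_feas \<F> A = (\<lambda>B. B - (A \<union> bar_set A)) ` \<F>"

definition unsigned :: "int set \<Rightarrow> int set" where
  "unsigned S = abs ` S"

definition orientable :: "int set set \<Rightarrow> int set \<Rightarrow> int \<Rightarrow> bool" where
  "orientable \<F>' B i \<longleftrightarrow> (B - {i, - i}) \<union> ({i, - i} - B) \<notin> \<F>'"

definition active :: "int set \<Rightarrow> int set set \<Rightarrow> int set \<Rightarrow> int \<Rightarrow> bool" where
  "active E' \<F>' B i \<longleftrightarrow> i \<in> E' \<and> orientable \<F>' B i \<and>
     \<not> (\<exists>j\<in>E'. j < i \<and> (B - {i, j, - i, - j}) \<union> ({i, j, - i, - j} - B) \<in> \<F>')"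

definition a_count :: "nat \<Rightarrow> int set set \<Rightarrow> int set \<Rightarrow> nat" where
  "a_count n \<F> I = card {i \<in> unsigned I.
      active ({1..int n} - ({1..int n} - unsigned I)) (proj_feas \<F> ({1..int n} - unsigned I)) I i}"

end

theory Submission
  imports Defs
begin

definition transv :: "int set \<Rightarrow> int set \<Rightarrow> bool" where
  "transv T S \<longleftrightarrow> S \<subseteq> T \<union> uminus ` T \<and> (\<forall>k\<in>T. k \<in> S \<longleftrightarrow> -k \<notin> S)"

definition flip2 :: "int set \<Rightarrow> int \<Rightarrow> int \<Rightarrow> int set" where
  "flip2 B i j = (B - {i,j,-i,-j}) \<union> ({i,j,-i,-j} - B)"

lemma mem_flip2: "x \<in> flip2 B i j \<longleftrightarrow> (x \<in> B \<longleftrightarrow> x \<notin> {i,j,-i,-j})"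
  unfolding flip2_def by auto

definition PX :: "int set \<Rightarrow> int set set \<Rightarrow> bool" where
  "PX T F \<longleftrightarrow> (\<forall>B1\<in>F. \<forall>B2\<in>F. \<forall>i\<in>T. (i\<in>B1 \<longleftrightarrow> i\<notin>B2) \<longrightarrow>
      (\<exists>j\<in>T. (j\<in>B1 \<longleftrightarrow> j\<notin>B2) \<and> flip2 B1 i j \<in> F))"

definition dm :: "int set set \<Rightarrow> int set \<Rightarrow> nat" where
  "dm F S = Min ((\<lambda>B. card (S - B)) ` F)"

definition act :: "int set \<Rightarrow> int set set \<Rightarrow> int set \<Rightarrow> int \<Rightarrow> bool" where
  "act T F B i \<longleftrightarrow> (\<forall>B'\<in>F. (\<forall>k\<in>T. i < k \<longrightarrow> (k\<in>B' \<longleftrightarrow> k\<in>B)) \<longrightarrow> (i\<in>B' \<longleftrightarrow> i\<in>B))"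

definition LHS :: "int set \<Rightarrow> int set set \<Rightarrow> 'a::comm_ring_1 \<Rightarrow> 'a" where
  "LHS T F v = (\<Sum>S\<in>{S. transv T S}. (v - 1) ^ dm F S)"

definition RHS :: "int set \<Rightarrow> int set set \<Rightarrow> 'a::comm_ring_1 \<Rightarrow> 'a" where
  "RHS T F v = (\<Sum>B\<in>F. v ^ card {i\<in>T. act T F B i})"

lemma finite_transv: "finite T \<Longrightarrow> finite {S. transv T S}"
proof -
  assume "finite T"
  then have "{S. transv T S} \<subseteq> Pow (T \<union> uminus ` T)" "finite (Pow (T \<union> uminus ` T))"
    by (auto simp: transv_def)
  then show ?thesis by (rule finite_subset)
qed

lemma finite_fam: "finite T \<Longrightarrow> \<forall>B\<in>F. transv T B \<Longrightarrow> finite F"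
  using finite_transv finite_subset[of F "{S. transv T S}"] by blast

lemma dm_le: "finite F \<Longrightarrow> B \<in> F \<Longrightarrow> dm F S \<le> card (S - B)"
  unfolding dm_def by (rule Min_le) auto

lemma dm_ex: "finite F \<Longrightarrow> F \<noteq> {} \<Longrightarrow> \<exists>B\<in>F. dm F S = card (S - B)"
proof -
  assume a: "finite F" "F \<noteq> {}"
  have "Min ((\<lambda>B. card (S - B)) ` F) \<in> (\<lambda>B. card (S - B)) ` F" by (rule Min_in) (use a in auto)
  then show ?thesis unfolding dm_def by auto
qed

lemma dm_eqI: "finite F \<Longrightarrow> B \<in> F \<Longrightarrow> card (S - B) = d \<Longrightarrow> (\<And>B'. B' \<in> F \<Longrightarrow> d \<le> card (S - B')) \<Longrightarrow> dm F S = d"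
proof -
  assume a: "finite F" "B \<in> F" "card (S - B) = d" "\<And>B'. B' \<in> F \<Longrightarrow> d \<le> card (S - B')"
  then obtain B0 where "B0 \<in> F" "dm F S = card (S - B0)" using dm_ex by blast
  then have "d \<le> dm F S" using a(4) by simp
  moreover have "dm F S \<le> d" using dm_le[OF a(1,2), of S] a(3) by simp
  ultimately show ?thesis by simp
qed

lemma transv_pos_notin:
  assumes "transv T S" "T \<subseteq> {1..}" "m \<notin> T" "m \<ge> 1"
  shows "m \<notin> S" "-m \<notin> S"
  using assms unfolding transv_def by force+

lemma transv_memD: "transv T S \<Longrightarrow> k \<in> T \<Longrightarrow> k \<in> S \<longleftrightarrow> -k \<notin> S"
  unfolding transv_def by blast

lemma transv_subD: "transv T S \<Longrightarrow> x \<in> S \<Longrightarrow> x \<in> T \<or> -x \<in> T"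
  unfolding transv_def by force

lemma transv_I: "(\<And>x. x \<in> S \<Longrightarrow> x \<in> T \<or> -x \<in> T) \<Longrightarrow> (\<And>k. k \<in> T \<Longrightarrow> k \<in> S \<longleftrightarrow> -k \<notin> S) \<Longrightarrow> transv T S"
proof -
  assume a: "\<And>x. x \<in> S \<Longrightarrow> x \<in> T \<or> -x \<in> T" "\<And>k. k \<in> T \<Longrightarrow> k \<in> S \<longleftrightarrow> -k \<notin> S"
  have "S \<subseteq> T \<union> uminus ` T"
  proof
    fix x assume "x \<in> S"
    then have "x \<in> T \<or> -x \<in> T" by (rule a(1))
    moreover have "-x \<in> T \<Longrightarrow> x \<in> uminus ` T" by (rule image_eqI[of x uminus "-x"]) auto
    ultimately show "x \<in> T \<union> uminus ` T" by blast
  qed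
  then show ?thesis unfolding transv_def using a(2) by blast
qed

lemma transv_insert_I:
  assumes S0: "transv T0 S0" and a: "T0 \<subseteq> {1..}" "m \<notin> T0" "m \<ge> 1" and s: "s = m \<or> s = -m"
  shows "transv (insert m T0) (insert s S0)"
proof (rule transv_I)
  have n: "m \<notin> S0" "-m \<notin> S0" using transv_pos_notin[OF S0 a] by auto
  fix x assume "x \<in> insert s S0"
  then show "x \<in> insert m T0 \<or> -x \<in> insert m T0" using s transv_subD[OF S0] by auto
next
  have n: "m \<notin> S0" "-m \<notin> S0" using transv_pos_notin[OF S0 a] by auto
  fix k assume k: "k \<in> insert m T0"
  show "k \<in> insert s S0 \<longleftrightarrow> -k \<notin> insert s S0"
  proof (cases "k = m")
    case True then show ?thesis using s n a(3) by auto
  next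
    case False
    then have "k \<in> T0" using k by auto
    then have "k \<noteq> s" "-k \<noteq> s" using s a False by auto
    then show ?thesis using transv_memD[OF S0 \<open>k \<in> T0\<close>] by auto
  qed
qed

lemma transv_restr:
  assumes S: "transv (insert m T0) S" and a: "T0 \<subseteq> {1..}" "m \<notin> T0" "m \<ge> 1"
  shows "transv T0 (S - {m,-m})"
proof (rule transv_I)
  fix x assume x: "x \<in> S - {m,-m}"
  have "x \<in> insert m T0 \<or> -x \<in> insert m T0" using transv_subD[OF S] x by blast
  then have "x = m \<or> x \<in> T0 \<or> -x = m \<or> -x \<in> T0" by simp
  moreover have "x \<noteq> m" "-x \<noteq> m" using x by auto
  ultimately show "x \<in> T0 \<or> -x \<in> T0" by blast
next
  fix k assume k: "k \<in> T0"
  then have "k \<noteq> m" "k \<noteq> -m" "-k \<noteq> m" "-k \<noteq> -m" using a by auto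
  then show "k \<in> S - {m, - m} \<longleftrightarrow> - k \<notin> S - {m, - m}" using transv_memD[OF S, of k] k by simp
qed

lemma transv_insert_cases:
  assumes S: "transv (insert m T0) S" and a: "T0 \<subseteq> {1..}" "m \<notin> T0" "m \<ge> 1"
  shows "(m \<in> S \<and> -m \<notin> S \<and> S = insert m (S - {m,-m})) \<or> (-m \<in> S \<and> m \<notin> S \<and> S = insert (-m) (S - {m,-m}))"
proof -
  have "m \<in> S \<longleftrightarrow> -m \<notin> S" using transv_memD[OF S, of m] by simp
  then show ?thesis by blast
qed

lemma transv_insert_split:
  assumes "T0 \<subseteq> {1..}" "m \<notin> T0" "m \<ge> 1"
  shows "{S. transv (insert m T0) S} = insert m ` {S. transv T0 S} \<union> insert (-m) ` {S. transv T0 S}"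
proof (rule set_eqI, rule iffI)
  fix S assume "S \<in> {S. transv (insert m T0) S}"
  then have S: "transv (insert m T0) S" by simp
  have t0: "transv T0 (S - {m, -m})" by (rule transv_restr[OF S assms])
  from transv_insert_cases[OF S assms] t0
  show "S \<in> insert m ` {S. transv T0 S} \<union> insert (-m) ` {S. transv T0 S}"
    by blast
next
  fix S assume "S \<in> insert m ` {S. transv T0 S} \<union> insert (-m) ` {S. transv T0 S}"
  then obtain S0 s where S0: "transv T0 S0" and "s = m \<or> s = -m" "S = insert s S0" by blast
  then show "S \<in> {S. transv (insert m T0) S}" using transv_insert_I[OF S0 assms] by auto
qed

lemma sum_split_transv:
  fixes f :: "int set \<Rightarrow> 'a::comm_ring_1"
  assumes "T0 \<subseteq> {1..}" "m \<notin> T0" "m \<ge> 1" "finite T0"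
  shows "(\<Sum>S\<in>{S. transv (insert m T0) S}. f S) =
     (\<Sum>S\<in>{S. transv T0 S}. f (insert m S)) + (\<Sum>S\<in>{S. transv T0 S}. f (insert (-m) S))"
proof -
  let ?X = "{S. transv T0 S}"
  have fin: "finite ?X" using finite_transv assms by auto
  have inj1: "inj_on (insert m) ?X" and inj2: "inj_on (insert (-m)) ?X"
    using transv_pos_notin[OF _ assms(1-3)] unfolding inj_on_def by (metis insert_ident mem_Collect_eq)+
  have disj: "insert m ` ?X \<inter> insert (-m) ` ?X = {}"
  proof (rule ccontr)
    assume "insert m ` ?X \<inter> insert (-m) ` ?X \<noteq> {}"
    then obtain xa xb where "insert m xa = insert (-m) xb" "transv T0 xb" by auto
    then have "m \<in> insert (-m) xb" by (metis insertI1)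
    then show False using transv_pos_notin[OF \<open>transv T0 xb\<close> assms(1-3)] assms(3) by auto
  qed
  have "(\<Sum>S\<in>insert m ` ?X \<union> insert (-m) ` ?X. f S) = (\<Sum>S\<in>insert m ` ?X. f S) + (\<Sum>S\<in>insert (-m) ` ?X. f S)"
    by (rule sum.union_disjoint) (use fin disj in auto)
  also have "(\<Sum>S\<in>insert m ` ?X. f S) = (\<Sum>S\<in>?X. f (insert m S))"
    using sum.reindex[OF inj1] by simp
  also have "(\<Sum>S\<in>insert (-m) ` ?X. f S) = (\<Sum>S\<in>?X. f (insert (-m) S))"
    using sum.reindex[OF inj2] by simp
  finally show ?thesis unfolding transv_insert_split[OF assms(1-3)] .
qed


locale stepctx =
  fixes T0 :: "int set" and m :: int and F :: "int set set"
  assumes T0pos: "T0 \<subseteq> {1..}" and finT0: "finite T0" and mlt: "\<forall>a\<in>T0. a < m" and m1: "1 \<le> m"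
    and Ftr: "\<forall>B\<in>F. transv (insert m T0) B" and FPX: "PX (insert m T0) F"
begin

definition R :: "int set \<Rightarrow> int set" where "R B = B - {m, -m}"
definition Fs :: "int \<Rightarrow> int set set" where "Fs s = R ` {B\<in>F. s \<in> B}"

lemma mnot: "m \<notin> T0" using mlt by auto

lemma finF: "finite F"
  using finite_fam[of "insert m T0" F] finT0 Ftr by auto

lemma R_tr: "B \<in> F \<Longrightarrow> transv T0 (R B)"
  unfolding R_def using transv_restr[OF _ T0pos mnot m1] Ftr by auto

lemma R_ins: "B \<in> F \<Longrightarrow> s \<in> B \<Longrightarrow> s = m \<or> s = -m \<Longrightarrow> B = insert s (R B)"
  unfolding R_def using transv_insert_cases[OF _ T0pos mnot m1] Ftr by blast

lemma sgn_cases: "B \<in> F \<Longrightarrow> (m \<in> B \<longleftrightarrow> -m \<notin> B)"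
  using transv_memD[of "insert m T0" B m] Ftr by auto

lemma T0_ne: "k \<in> T0 \<Longrightarrow> k \<noteq> m \<and> k \<noteq> -m \<and> -k \<noteq> m \<and> -k \<noteq> -m \<and> k \<ge> 1 \<and> k < m"
  using T0pos mlt m1 by force

lemma card_ins:
  assumes S0: "transv T0 S0" and s: "s = m \<or> s = -m"
  shows "card (insert s S0 - B) = card (S0 - R B) + (if s \<in> B then 0 else 1)"
proof -
  have n: "m \<notin> S0" "-m \<notin> S0" using transv_pos_notin[OF S0 T0pos mnot m1] by auto
  have fin: "finite S0" using S0 finT0 unfolding transv_def
    by (meson finite_Un finite_imageI rev_finite_subset)
  have e: "S0 - R B = S0 - B" unfolding R_def using n by auto
  show ?thesis
  proof (cases "s \<in> B")
    case True
    then have "insert s S0 - B = S0 - B" by auto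
    then show ?thesis using e True by simp
  next
    case False
    then have "insert s S0 - B = insert s (S0 - B)" by auto
    moreover have "s \<notin> S0 - B" using n s by auto
    ultimately show ?thesis using e False fin by simp
  qed
qed

lemma PX_Fs: assumes s: "s = m \<or> s = -m" shows "PX T0 (Fs s)"
  unfolding PX_def
proof (intro ballI impI)
  fix B1' B2' i assume B1': "B1' \<in> Fs s" and B2': "B2' \<in> Fs s" and i: "i \<in> T0"
    and d: "i \<in> B1' \<longleftrightarrow> i \<notin> B2'"
  obtain B1 where B1: "B1 \<in> F" "s \<in> B1" "B1' = R B1" using B1' unfolding Fs_def by auto
  obtain B2 where B2: "B2 \<in> F" "s \<in> B2" "B2' = R B2" using B2' unfolding Fs_def by auto
  have ii: "i \<noteq> m" "i \<noteq> -m" using T0_ne[OF i] by auto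
  have d2: "i \<in> B1 \<longleftrightarrow> i \<notin> B2" using d B1 B2 ii unfolding R_def by auto
  obtain j where j: "j \<in> insert m T0" "j \<in> B1 \<longleftrightarrow> j \<notin> B2" "flip2 B1 i j \<in> F"
    using FPX B1(1) B2(1) i d2 unfolding PX_def by blast
  have mm: "m \<in> B1 \<longleftrightarrow> m \<in> B2" using s B1 B2 sgn_cases by auto
  have jT: "j \<in> T0" using j mm by auto
  have jj: "j \<noteq> m" "j \<noteq> -m" "-j \<noteq> m" "-j \<noteq> -m" "-i \<noteq> m" "-i \<noteq> -m" using T0_ne[OF jT] T0_ne[OF i] by auto
  have sf: "s \<in> flip2 B1 i j" using B1(2) s ii jj unfolding mem_flip2 by auto
  have rf: "R (flip2 B1 i j) = flip2 (R B1) i j"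
    unfolding R_def using ii jj by (auto simp: mem_flip2)
  have "flip2 B1' i j \<in> Fs s" unfolding Fs_def B1(3) rf[symmetric] using j(3) sf by auto
  moreover have "j \<in> B1' \<longleftrightarrow> j \<notin> B2'" using j(2) B1(3) B2(3) jj unfolding R_def by auto
  ultimately show "\<exists>j\<in>T0. (j \<in> B1' \<longleftrightarrow> j \<notin> B2') \<and> flip2 B1' i j \<in> Fs s" using jT by blast
qed

lemma Fs_tr: "\<forall>B\<in>Fs s. transv T0 B" unfolding Fs_def using R_tr by auto

lemma act_Fs:
  assumes B: "B \<in> F" "s \<in> B" and s: "s = m \<or> s = -m" and i: "i \<in> T0"
  shows "act (insert m T0) F B i \<longleftrightarrow> act T0 (Fs s) (R B) i"
proof
  assume a: "act (insert m T0) F B i"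
  show "act T0 (Fs s) (R B) i" unfolding act_def
  proof (intro ballI impI)
    fix B'' assume B'': "B'' \<in> Fs s" and ag: "\<forall>k\<in>T0. i < k \<longrightarrow> (k \<in> B'' \<longleftrightarrow> k \<in> R B)"
    obtain B' where B': "B' \<in> F" "s \<in> B'" "B'' = R B'" using B'' unfolding Fs_def by auto
    have "\<forall>k\<in>insert m T0. i < k \<longrightarrow> (k \<in> B' \<longleftrightarrow> k \<in> B)"
    proof (intro ballI impI)
      fix k assume k: "k \<in> insert m T0" "i < k"
      show "k \<in> B' \<longleftrightarrow> k \<in> B"
      proof (cases "k = m")
        case True then show ?thesis using B B' s sgn_cases by auto
      next
        case False then have "k \<in> T0" using k by auto
        then show ?thesis using ag k B' T0_ne[of k] unfolding R_def by auto
      qed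
    qed
    then have "i \<in> B' \<longleftrightarrow> i \<in> B" using a B' unfolding act_def by blast
    then show "i \<in> B'' \<longleftrightarrow> i \<in> R B" using B' T0_ne[OF i] unfolding R_def by auto
  qed
next
  assume a: "act T0 (Fs s) (R B) i"
  show "act (insert m T0) F B i" unfolding act_def
  proof (intro ballI impI)
    fix B' assume B': "B' \<in> F" and ag: "\<forall>k\<in>insert m T0. i < k \<longrightarrow> (k \<in> B' \<longleftrightarrow> k \<in> B)"
    have "m \<in> B' \<longleftrightarrow> m \<in> B" using ag T0_ne[OF i] by auto
    then have sB': "s \<in> B'" using s B B' sgn_cases by auto
    then have inF: "R B' \<in> Fs s" unfolding Fs_def using B' by auto
    have "\<forall>k\<in>T0. i < k \<longrightarrow> (k \<in> R B' \<longleftrightarrow> k \<in> R B)"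
      using ag T0_ne unfolding R_def by auto
    then have "i \<in> R B' \<longleftrightarrow> i \<in> R B" using a inF unfolding act_def by blast
    then show "i \<in> B' \<longleftrightarrow> i \<in> B" using T0_ne[OF i] unfolding R_def by auto
  qed
qed

lemma act_m: "B \<in> F \<Longrightarrow> act (insert m T0) F B m \<longleftrightarrow> (\<forall>B'\<in>F. m \<in> B' \<longleftrightarrow> m \<in> B)"
proof -
  have v: "\<And>B'. (\<forall>k\<in>insert m T0. m < k \<longrightarrow> (k\<in>B' \<longleftrightarrow> k\<in>B))"
  proof (intro ballI impI)
    fix B' k assume "k \<in> insert m T0" "m < k"
    then have False using mlt by force
    then show "k\<in>B' \<longleftrightarrow> k\<in>B" by blast
  qed
  show ?thesis unfolding act_def using v by blast
qed

lemma close: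
  assumes s: "s = m \<or> s = -m" and B: "B \<in> F" "s \<notin> B" and B2: "B2 \<in> F" "s \<in> B2" and S0: "transv T0 S0"
  shows "\<exists>B'\<in>F. s \<in> B' \<and> card (S0 - R B') \<le> card (S0 - R B) + 1"
proof -
  have d: "m \<in> B \<longleftrightarrow> m \<notin> B2" using s B B2 sgn_cases by auto
  obtain j where j: "j \<in> insert m T0" "flip2 B m j \<in> F"
    using FPX B(1) B2(1) d unfolding PX_def by blast
  have sf: "s \<in> flip2 B m j" using s B(2) unfolding mem_flip2 by auto
  have fin: "finite S0" using S0 finT0 unfolding transv_def
    by (meson finite_Un finite_imageI rev_finite_subset)
  have n: "m \<notin> S0" "-m \<notin> S0" using transv_pos_notin[OF S0 T0pos mnot m1] by auto
  have sub: "S0 - R (flip2 B m j) \<subseteq> (S0 - R B) \<union> (S0 \<inter> {j, -j})"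
    unfolding R_def using n by (auto simp: mem_flip2)
  have c1: "card (S0 \<inter> {j,-j}) \<le> 1"
  proof (cases "j \<in> T0")
    case True
    have "j \<in> S0 \<longleftrightarrow> -j \<notin> S0" using transv_memD[OF S0 True] .
    then have "S0 \<inter> {j,-j} = {j} \<or> S0 \<inter> {j,-j} = {-j}" by auto
    then show ?thesis by auto
  next
    case False
    then have "j = m" using j by auto
    then have "S0 \<inter> {j,-j} = {}" using n by auto
    then show ?thesis by simp
  qed
  have "card (S0 - R (flip2 B m j)) \<le> card ((S0 - R B) \<union> (S0 \<inter> {j, -j}))"
    by (rule card_mono) (use fin sub in auto)
  also have "\<dots> \<le> card (S0 - R B) + card (S0 \<inter> {j,-j})" by (rule card_Un_le)
  finally show ?thesis using c1 j(2) sf by (intro bexI[of _ "flip2 B m j"]) auto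
qed

lemma inj_R: "s = m \<or> s = -m \<Longrightarrow> inj_on R {B\<in>F. s \<in> B}"
  unfolding inj_on_def using R_ins by (metis (mono_tags, lifting) mem_Collect_eq)

lemma finFs: "finite (Fs s)" unfolding Fs_def using finF by auto

lemma dm_gen:
  assumes s: "s = m \<or> s = -m" and ex: "\<exists>B\<in>F. s \<in> B" and S0: "transv T0 S0"
  shows "dm F (insert s S0) = dm (Fs s) S0"
proof -
  have ne: "Fs s \<noteq> {}" using ex unfolding Fs_def by auto
  obtain B0' where B0': "B0' \<in> Fs s" "dm (Fs s) S0 = card (S0 - B0')" using dm_ex[OF finFs ne] by blast
  obtain B0 where B0: "B0 \<in> F" "s \<in> B0" "B0' = R B0" using B0'(1) unfolding Fs_def by auto
  show ?thesis
  proof (rule dm_eqI[OF finF B0(1)])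
    show "card (insert s S0 - B0) = dm (Fs s) S0" using card_ins[OF S0 s, of B0] B0 B0' by simp
  next
    fix B assume B: "B \<in> F"
    show "dm (Fs s) S0 \<le> card (insert s S0 - B)"
    proof (cases "s \<in> B")
      case True
      then have "R B \<in> Fs s" unfolding Fs_def using B by auto
      then have "dm (Fs s) S0 \<le> card (S0 - R B)" by (rule dm_le[OF finFs])
      then show ?thesis using card_ins[OF S0 s, of B] True by simp
    next
      case False
      obtain B2 where B2: "B2 \<in> F" "s \<in> B2" using ex by blast
      obtain B' where B': "B' \<in> F" "s \<in> B'" "card (S0 - R B') \<le> card (S0 - R B) + 1"
        using close[OF s B False B2 S0] by blast
      then have "R B' \<in> Fs s" unfolding Fs_def by auto
      then have "dm (Fs s) S0 \<le> card (S0 - R B')" by (rule dm_le[OF finFs])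
      then show ?thesis using card_ins[OF S0 s, of B] False B'(3) by simp
    qed
  qed
qed

lemma dm_all:
  assumes s: "s = m \<or> s = -m" and all: "\<forall>B\<in>F. s \<in> B" and Fne: "F \<noteq> {}" and S0: "transv T0 S0"
  shows "dm F (insert (-s) S0) = dm (Fs s) S0 + 1"
proof -
  have ne: "Fs s \<noteq> {}" using all Fne unfolding Fs_def by auto
  have s': "-s = m \<or> -s = -m" using s by auto
  have nb: "\<And>B. B \<in> F \<Longrightarrow> -s \<notin> B" using all s sgn_cases by auto
  obtain B0' where B0': "B0' \<in> Fs s" "dm (Fs s) S0 = card (S0 - B0')" using dm_ex[OF finFs ne] by blast
  obtain B0 where B0: "B0 \<in> F" "s \<in> B0" "B0' = R B0" using B0'(1) unfolding Fs_def by auto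
  show ?thesis
  proof (rule dm_eqI[OF finF B0(1)])
    show "card (insert (-s) S0 - B0) = dm (Fs s) S0 + 1" using card_ins[OF S0 s', of B0] nb[OF B0(1)] B0 B0' by simp
  next
    fix B assume B: "B \<in> F"
    have "R B \<in> Fs s" unfolding Fs_def using B all by auto
    then have "dm (Fs s) S0 \<le> card (S0 - R B)" by (rule dm_le[OF finFs])
    then show "dm (Fs s) S0 + 1 \<le> card (insert (-s) S0 - B)" using card_ins[OF S0 s', of B] nb[OF B] by simp
  qed
qed

lemma collect_insert_eq: "{i \<in> insert m T0. P i} = (if P m then insert m {i\<in>T0. P i} else {i\<in>T0. P i})"
  by auto

lemma card_act:
  assumes B: "B \<in> F" "s \<in> B" and s: "s = m \<or> s = -m"
  shows "card {i \<in> insert m T0. act (insert m T0) F B i} =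
     (if act (insert m T0) F B m then 1 else 0) + card {i\<in>T0. act T0 (Fs s) (R B) i}"
proof -
  have e: "{i\<in>T0. act (insert m T0) F B i} = {i\<in>T0. act T0 (Fs s) (R B) i}"
    using act_Fs[OF B s] by blast
  have fin: "finite {i\<in>T0. act T0 (Fs s) (R B) i}" using finT0 by auto
  have mn: "m \<notin> {i\<in>T0. act T0 (Fs s) (R B) i}" using mnot by auto
  show ?thesis unfolding collect_insert_eq e using fin mn by simp
qed

lemma rhs_part:
  fixes v :: "'a::comm_ring_1"
  assumes s: "s = m \<or> s = -m" and c: "\<And>B. B \<in> F \<Longrightarrow> s \<in> B \<Longrightarrow> (if act (insert m T0) F B m then 1 else 0) = c"
  shows "(\<Sum>B\<in>{B\<in>F. s \<in> B}. v ^ card {i \<in> insert m T0. act (insert m T0) F B i}) = v ^ c * RHS T0 (Fs s) v"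
proof -
  have "(\<Sum>B\<in>{B\<in>F. s \<in> B}. v ^ card {i \<in> insert m T0. act (insert m T0) F B i})
      = (\<Sum>B\<in>{B\<in>F. s \<in> B}. v ^ c * v ^ card {i\<in>T0. act T0 (Fs s) (R B) i})"
  proof (rule sum.cong[OF refl])
    fix B assume "B \<in> {B\<in>F. s \<in> B}"
    then have B: "B \<in> F" "s \<in> B" by auto
    show "v ^ card {i \<in> insert m T0. act (insert m T0) F B i} = v ^ c * v ^ card {i\<in>T0. act T0 (Fs s) (R B) i}"
      unfolding card_act[OF B s] c[OF B] by (simp add: power_add)
  qed
  also have "\<dots> = v ^ c * (\<Sum>B\<in>{B\<in>F. s \<in> B}. v ^ card {i\<in>T0. act T0 (Fs s) (R B) i})"
    by (simp add: sum_distrib_left)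
  also have "(\<Sum>B\<in>{B\<in>F. s \<in> B}. v ^ card {i\<in>T0. act T0 (Fs s) (R B) i}) = RHS T0 (Fs s) v"
    unfolding RHS_def Fs_def using sum.reindex[OF inj_R[OF s], of "\<lambda>B'. v ^ card {i\<in>T0. act T0 (R ` {B \<in> F. s \<in> B}) B' i}"]
    by simp
  finally show ?thesis .
qed

lemma step:
  fixes v :: "'a::comm_ring_1"
  assumes IH: "\<And>G. G \<noteq> {} \<Longrightarrow> \<forall>B\<in>G. transv T0 B \<Longrightarrow> PX T0 G \<Longrightarrow> LHS T0 G v = RHS T0 G v"
    and Fne: "F \<noteq> {}"
  shows "LHS (insert m T0) F v = RHS (insert m T0) F v"
proof -
  let ?X = "{S. transv T0 S}"
  let ?g = "\<lambda>B. v ^ card {i \<in> insert m T0. act (insert m T0) F B i}"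
  have L: "LHS (insert m T0) F v = (\<Sum>S\<in>?X. (v-1) ^ dm F (insert m S)) + (\<Sum>S\<in>?X. (v-1) ^ dm F (insert (-m) S))"
    unfolding LHS_def by (rule sum_split_transv[OF T0pos mnot m1 finT0])
  have Fu: "F = {B\<in>F. m \<in> B} \<union> {B\<in>F. -m \<in> B}" using sgn_cases by auto
  have Fd: "{B\<in>F. m \<in> B} \<inter> {B\<in>F. -m \<in> B} = {}" using sgn_cases by auto
  have R: "RHS (insert m T0) F v = (\<Sum>B\<in>{B\<in>F. m \<in> B}. ?g B) + (\<Sum>B\<in>{B\<in>F. -m \<in> B}. ?g B)"
    unfolding RHS_def by (subst Fu) (rule sum.union_disjoint, use finF Fd in auto)
  show ?thesis
  proof (cases "\<exists>s. (s = m \<or> s = -m) \<and> (\<forall>B\<in>F. s \<in> B)")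
    case True
    then obtain s where s: "s = m \<or> s = -m" and all: "\<forall>B\<in>F. s \<in> B" by blast
    have ex: "\<exists>B\<in>F. s \<in> B" using all Fne by auto
    have neFs: "Fs s \<noteq> {}" using ex unfolding Fs_def by auto
    have IHs: "LHS T0 (Fs s) v = RHS T0 (Fs s) v" by (rule IH[OF neFs Fs_tr PX_Fs[OF s]])
    have pair: "(v-1) ^ dm F (insert m S) + (v-1) ^ dm F (insert (-m) S) = v * (v-1) ^ dm (Fs s) S"
      if S: "S \<in> ?X" for S
    proof -
      have S0: "transv T0 S" using S by simp
      have a1: "dm F (insert s S) = dm (Fs s) S" by (rule dm_gen[OF s ex S0])
      have a2: "dm F (insert (-s) S) = dm (Fs s) S + 1" by (rule dm_all[OF s all Fne S0])
      have "(v-1) ^ dm F (insert s S) + (v-1) ^ dm F (insert (-s) S) = v * (v-1) ^ dm (Fs s) S"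
        unfolding a1 a2 by (simp add: algebra_simps)
      then show ?thesis using s by (auto simp: add.commute)
    qed
    have "LHS (insert m T0) F v = (\<Sum>S\<in>?X. v * (v-1) ^ dm (Fs s) S)"
      unfolding L sum.distrib[symmetric] using pair by (rule sum.cong[OF refl])
    also have "\<dots> = v * LHS T0 (Fs s) v" unfolding LHS_def by (simp add: sum_distrib_left)
    finally have LL: "LHS (insert m T0) F v = v * LHS T0 (Fs s) v" .
    have actm: "\<And>B. B \<in> F \<Longrightarrow> act (insert m T0) F B m"
      using act_m all s sgn_cases by metis
    have FF: "{B\<in>F. s \<in> B} = F" using all by auto
    have "RHS (insert m T0) F v = (\<Sum>B\<in>{B\<in>F. s \<in> B}. ?g B)" unfolding FF RHS_def ..
    also have "\<dots> = v ^ 1 * RHS T0 (Fs s) v" by (rule rhs_part[OF s]) (use actm in auto)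
    finally show ?thesis using LL IHs by simp
  next
    case False
    have exs: "\<exists>B\<in>F. s \<in> B" if s: "s = m \<or> s = -m" for s
    proof -
      have s': "-s = m \<or> -s = -m" using s by auto
      obtain B where "B \<in> F" "-s \<notin> B" using False s' by blast
      then show ?thesis using s sgn_cases by auto
    qed
    have actm: "\<not> act (insert m T0) F B m" if B: "B \<in> F" for B
    proof -
      have "\<exists>B'\<in>F. \<not> (m \<in> B' \<longleftrightarrow> m \<in> B)"
      proof (cases "m \<in> B")
        case True
        obtain B' where "B' \<in> F" "-m \<in> B'" using exs[of "-m"] by auto
        then show ?thesis using True sgn_cases by auto
      next
        case False
        obtain B' where "B' \<in> F" "m \<in> B'" using exs[of "m"] by auto
        then show ?thesis using False by auto
      qed
      then show ?thesis using act_m[OF B] by blast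
    qed
    have part: "LHS T0 (Fs s) v = RHS T0 (Fs s) v" if s: "s = m \<or> s = -m" for s
    proof -
      have neFs: "Fs s \<noteq> {}" using exs[OF s] unfolding Fs_def by auto
      show ?thesis by (rule IH[OF neFs Fs_tr PX_Fs[OF s]])
    qed
    have lp: "(\<Sum>S\<in>?X. (v-1) ^ dm F (insert s S)) = LHS T0 (Fs s) v" if s: "s = m \<or> s = -m" for s
      unfolding LHS_def by (rule sum.cong[OF refl]) (simp add: dm_gen[OF s exs[OF s]])
    have rp: "(\<Sum>B\<in>{B\<in>F. s \<in> B}. ?g B) = RHS T0 (Fs s) v" if s: "s = m \<or> s = -m" for s
      using rhs_part[OF s, of 0 v] actm by simp
    show ?thesis unfolding L R using lp[of m] lp[of "-m"] rp[of m] rp[of "-m"] part[of m] part[of "-m"] by simp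
  qed
qed

end

lemma transv_empty: "transv {} S \<longleftrightarrow> S = {}" unfolding transv_def by simp

theorem core:
  fixes v :: "'a::comm_ring_1"
  shows "finite T \<Longrightarrow> T \<subseteq> {1..} \<Longrightarrow> F \<noteq> {} \<Longrightarrow> \<forall>B\<in>F. transv T B \<Longrightarrow> PX T F \<Longrightarrow> LHS T F v = RHS T F v"
proof (induction T arbitrary: F rule: finite_linorder_max_induct)
  case empty
  have h: "\<forall>B\<in>F. B = {}" using empty.prems(3) unfolding transv_empty .
  have sub: "F \<subseteq> {{}}"
  proof
    fix B assume "B \<in> F" then have "B = {}" using h by simp
    then show "B \<in> {{}}" by simp
  qed
  obtain B0 where B0: "B0 \<in> F" using empty.prems(2) by auto
  then have "B0 = {}" using h by simp
  then have "{} \<in> F" using B0 by simp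
  then have FF: "F = {{}}" using sub by (intro subset_antisym) simp_all
  have X: "{S. transv {} S} = {{}}" unfolding transv_empty by simp
  have "dm F {} = 0" unfolding FF dm_def by simp
  then show ?case unfolding LHS_def RHS_def X FF by simp
next
  case (insert b A)
  have m1: "1 \<le> b" using insert.prems(1) by simp
  have A1: "A \<subseteq> {1..}" using insert.prems(1) by simp
  have ctx: "stepctx A b F"
    by (rule stepctx.intro[OF A1 insert.hyps(1) insert.hyps(2) m1 insert.prems(3) insert.prems(4)])
  have IH': "\<And>G. G \<noteq> {} \<Longrightarrow> \<forall>B\<in>G. transv A B \<Longrightarrow> PX A G \<Longrightarrow> LHS A G v = RHS A G v"
    by (rule insert.IH[OF A1])
  show ?case by (rule stepctx.step[OF ctx IH' insert.prems(2)])
qed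

lemma bar_mem: "x \<in> bar_set A \<longleftrightarrow> -x \<in> A"
  unfolding bar_set_def by (metis image_iff minus_minus)

lemma adm_card_transv:
  assumes adm: "admissible E B" and c: "card B = card E" and fin: "finite E" and pos: "E \<subseteq> {1..}"
  shows "transv E B"
proof -
  have sub: "B \<subseteq> E \<union> bar_set E" and na: "\<And>i. \<not> (i \<in> B \<and> -i \<in> B)" using adm unfolding admissible_def by auto
  have xE: "\<And>x. x \<in> B \<Longrightarrow> x \<in> E \<or> -x \<in> E" using sub bar_mem by blast
  have absE: "\<And>x. x \<in> B \<Longrightarrow> \<bar>x\<bar> \<in> E"
  proof -
    fix x assume "x \<in> B"
    then have "x \<in> E \<or> -x \<in> E" by (rule xE)
    moreover have "x \<in> E \<Longrightarrow> x \<ge> 1" "-x \<in> E \<Longrightarrow> -x \<ge> 1" using pos by auto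
    moreover have "x \<ge> 1 \<Longrightarrow> \<bar>x\<bar> = x" "-x \<ge> 1 \<Longrightarrow> \<bar>x\<bar> = -x" by arith+
    ultimately show "\<bar>x\<bar> \<in> E" by auto
  qed
  have inj: "inj_on abs B"
  proof (rule inj_onI)
    fix x y assume xy: "x \<in> B" "y \<in> B" "\<bar>x\<bar> = \<bar>y\<bar>"
    then have "x = y \<or> x = -y" by arith
    then show "x = y" using na xy by (metis minus_minus)
  qed
  have finB: "finite B" using sub fin unfolding bar_set_def by (meson finite_Un finite_imageI rev_finite_subset)
  have "abs ` B \<subseteq> E" using absE by auto
  moreover have "card (abs ` B) = card E" using card_image[OF inj] c by simp
  ultimately have AE: "abs ` B = E" using fin by (simp add: card_subset_eq)
  show ?thesis
  proof (rule transv_I)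
    fix x assume "x \<in> B" then show "x \<in> E \<or> -x \<in> E" by (rule xE)
  next
    fix k assume k: "k \<in> E"
    then obtain a where a: "a \<in> B" "\<bar>a\<bar> = k" using AE by blast
    have "k \<ge> 1" using k pos by auto
    then have "a = k \<or> a = -k" using a(2) by arith
    then have "k \<in> B \<or> -k \<in> B" using a(1) by auto
    then show "k \<in> B \<longleftrightarrow> -k \<notin> B" using na by blast
  qed
qed

lemma transv_sub_eq:
  assumes "transv T S" "transv T S'" "S \<subseteq> S'"
  shows "S = S'"
proof (rule subset_antisym[OF assms(3)], rule subsetI)
  fix x assume x: "x \<in> S'"
  then have "x \<in> T \<or> -x \<in> T" using transv_subD[OF assms(2)] by blast
  then show "x \<in> S"
  proof
    assume "x \<in> T"
    then show "x \<in> S" using transv_memD[OF assms(1)] transv_memD[OF assms(2)] assms(3) x by blast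
  next
    assume xt: "-x \<in> T"
    have "(-x \<in> S \<longleftrightarrow> - (-x) \<notin> S)" using transv_memD[OF assms(1) xt] .
    moreover have "(-x \<in> S' \<longleftrightarrow> - (-x) \<notin> S')" using transv_memD[OF assms(2) xt] .
    ultimately show "x \<in> S" using assms(3) x by auto
  qed
qed

lemma transv_finite: "finite T \<Longrightarrow> transv T S \<Longrightarrow> finite S"
  unfolding transv_def by (meson finite_Un finite_imageI rev_finite_subset)

lemma pos_neg: "E \<subseteq> {1..} \<Longrightarrow> k \<in> E \<Longrightarrow> -k \<notin> (E::int set)"
proof
  assume a: "E \<subseteq> {1..}" "k \<in> E" "-k \<in> E"
  then have "1 \<le> k" "1 \<le> -k" by auto
  then show False by simp
qed

lemma pos_negT: "(E::int set) \<subseteq> {1..} \<Longrightarrow> T \<subseteq> E \<Longrightarrow> k \<in> T \<Longrightarrow> -k \<notin> E - T \<and> k \<notin> E - T"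
  using pos_neg[of E k] by auto

definition RT :: "int set \<Rightarrow> int set \<Rightarrow> int set \<Rightarrow> int set" where
  "RT E T B = B - ((E - T) \<union> bar_set (E - T))"

lemma RT_mem: "x \<in> RT E T B \<longleftrightarrow> x \<in> B \<and> x \<notin> E - T \<and> -x \<notin> E - T"
  unfolding RT_def using bar_mem[of x "E - T"] by blast

lemma proj_RT: "proj_feas F (E - T) = RT E T ` F"
  unfolding proj_feas_def RT_def by simp

lemma RT_transv:
  assumes B: "transv E B" and T: "T \<subseteq> E" and pos: "E \<subseteq> {1..}"
  shows "transv T (RT E T B)"
proof (rule transv_I)
  fix x assume x: "x \<in> RT E T B"
  then have "x \<in> B" "x \<notin> E - T" "-x \<notin> E - T" unfolding RT_mem by auto
  then show "x \<in> T \<or> -x \<in> T" using transv_subD[OF B] by blast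
next
  fix k assume k: "k \<in> T"
  then have "k \<in> E" "k \<ge> 1" using T pos by auto
  then have "k \<notin> E - T" "-k \<notin> E - T" "- (-k) \<notin> E - T" using pos_negT[OF pos T k] by auto
  then show "k \<in> RT E T B \<longleftrightarrow> -k \<notin> RT E T B" unfolding RT_mem using transv_memD[OF B \<open>k \<in> E\<close>] by simp
qed

lemma RT_memT:
  assumes T: "T \<subseteq> E" and pos: "E \<subseteq> {1..}" and k: "k \<in> T"
  shows "k \<in> RT E T B \<longleftrightarrow> k \<in> B"
proof -
  have "k \<notin> E - T" "-k \<notin> E - T" using pos_negT[OF pos T k] by auto
  then show ?thesis unfolding RT_mem by simp
qed

lemma PX_proj:
  assumes PX: "PX E F" and tr: "\<forall>B\<in>F. transv E B" and T: "T \<subseteq> E" and pos: "E \<subseteq> {1..}"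
  shows "PX T (RT E T ` F)"
  unfolding PX_def
proof (intro ballI impI)
  fix B1' B2' i assume B1': "B1' \<in> RT E T ` F" and B2': "B2' \<in> RT E T ` F" and i: "i \<in> T"
    and d: "i \<in> B1' \<longleftrightarrow> i \<notin> B2'"
  obtain B1 where B1: "B1 \<in> F" "B1' = RT E T B1" using B1' by auto
  obtain B2 where B2: "B2 \<in> F" "B2' = RT E T B2" using B2' by auto
  have d2: "i \<in> B1 \<longleftrightarrow> i \<notin> B2" using d B1(2) B2(2) RT_memT[OF T pos i] by simp
  obtain j where j: "j \<in> E" "j \<in> B1 \<longleftrightarrow> j \<notin> B2" "flip2 B1 i j \<in> F"
    using PX B1(1) B2(1) i T d2 unfolding PX_def by blast
  have iE: "i \<notin> E - T" "-i \<notin> E - T" using pos_negT[OF pos T i] by auto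
  show "\<exists>j\<in>T. (j \<in> B1' \<longleftrightarrow> j \<notin> B2') \<and> flip2 B1' i j \<in> RT E T ` F"
  proof (cases "j \<in> T")
    case True
    have jE: "j \<notin> E - T" "-j \<notin> E - T" using pos_negT[OF pos T True] by auto
    have "RT E T (flip2 B1 i j) = flip2 B1' i j"
    proof (rule set_eqI)
      fix x
      show "x \<in> RT E T (flip2 B1 i j) \<longleftrightarrow> x \<in> flip2 B1' i j"
        unfolding B1(2) RT_mem mem_flip2 using iE jE by auto
    qed
    then have "flip2 B1' i j \<in> RT E T ` F" using j(3) by (metis imageI)
    moreover have "j \<in> B1' \<longleftrightarrow> j \<notin> B2'" using j(2) B1(2) B2(2) RT_memT[OF T pos True] by simp
    ultimately show ?thesis using True by blast
  next
    case False
    have jE: "j \<in> E - T" using False j(1) by simp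
    have "RT E T (flip2 B1 i j) = flip2 B1' i i"
    proof (rule set_eqI)
      fix x
      have "x = j \<or> x = -j \<Longrightarrow> \<not> (x \<notin> E - T \<and> -x \<notin> E - T)" using jE by auto
      then show "x \<in> RT E T (flip2 B1 i j) \<longleftrightarrow> x \<in> flip2 B1' i i"
        unfolding B1(2) RT_mem mem_flip2 using iE by auto
    qed
    then have "flip2 B1' i i \<in> RT E T ` F" using j(3) by (metis imageI)
    then show ?thesis using i d by blast
  qed
qed

lemma card_term:
  assumes S: "transv T S" and B: "transv E B" and T: "T \<subseteq> E" and pos: "E \<subseteq> {1..}" and fin: "finite E"
  shows "int (card (S \<inter> B)) - int (card (bar_set S \<inter> B)) = int (card S) - 2 * int (card (S - RT E T B))"
proof -
  have finS: "finite S" using transv_finite[OF _ S] fin T finite_subset by blast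
  have sE: "\<And>x. x \<in> S \<Longrightarrow> (x \<in> E \<or> -x \<in> E) \<and> x \<notin> E - T \<and> -x \<notin> E - T"
  proof -
    fix x assume "x \<in> S"
    then have "x \<in> T \<or> -x \<in> T" using transv_subD[OF S] by blast
    then show "(x \<in> E \<or> -x \<in> E) \<and> x \<notin> E - T \<and> -x \<notin> E - T"
      using pos_negT[OF pos T, of x] pos_negT[OF pos T, of "-x"] T by auto
  qed
  have e1: "S - RT E T B = S - B"
  proof (rule set_eqI)
    fix x show "x \<in> S - RT E T B \<longleftrightarrow> x \<in> S - B" using sE[of x] RT_mem[of x E T B] by blast
  qed
  have e2: "bar_set S \<inter> B = uminus ` (S - B)"
  proof (rule set_eqI)
    fix y
    show "y \<in> bar_set S \<inter> B \<longleftrightarrow> y \<in> uminus ` (S - B)"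
    proof
      assume y: "y \<in> bar_set S \<inter> B"
      then have "-y \<in> S" "y \<in> B" using bar_mem by auto
      moreover have "-y \<in> E \<or> - (-y) \<in> E" using sE[OF \<open>-y \<in> S\<close>] by blast
      ultimately have "-y \<notin> B" using transv_memD[OF B] by (metis minus_minus)
      then show "y \<in> uminus ` (S - B)" using \<open>-y \<in> S\<close> by (metis DiffI image_eqI minus_minus)
    next
      assume "y \<in> uminus ` (S - B)"
      then obtain x where x: "x \<in> S" "x \<notin> B" "y = -x" by auto
      have "x \<in> E \<or> -x \<in> E" using sE[OF x(1)] by blast
      then have "-x \<in> B" using transv_memD[OF B] x(2) by (metis minus_minus)
      then show "y \<in> bar_set S \<inter> B" using x bar_mem by auto
    qed
  qed
  have c2: "card (bar_set S \<inter> B) = card (S - B)" unfolding e2 by (rule card_image) (simp add: inj_on_def)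
  have c1: "card (S \<inter> B) + card (S - B) = card S"
    using card_Int_Diff[OF finS, of B] by simp
  show ?thesis unfolding e1 using c1 c2 by linarith
qed

lemma rank_eq:
  assumes finE: "finite E" and pos: "E \<subseteq> {1..}" and Fne: "F \<noteq> {}" and tr: "\<forall>B\<in>F. transv E B"
    and T: "T \<subseteq> E" and S: "transv T S"
  shows "rank_g F S = int (card S) - 2 * int (dm (RT E T ` F) S)"
proof -
  have finF: "finite F" using finite_fam[OF finE tr] .
  have finG: "finite (RT E T ` F)" using finF by simp
  have neG: "RT E T ` F \<noteq> {}" using Fne by simp
  obtain B0' where B0': "B0' \<in> RT E T ` F" "dm (RT E T ` F) S = card (S - B0')" using dm_ex[OF finG neG] by blast
  obtain B0 where B0: "B0 \<in> F" "B0' = RT E T B0" using B0'(1) by auto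
  have ct: "\<And>B. B \<in> F \<Longrightarrow> int (card (S \<inter> B)) - int (card (bar_set S \<inter> B)) = int (card S) - 2 * int (card (S - RT E T B))"
    using card_term[OF S _ T pos finE] tr by blast
  show ?thesis unfolding rank_g_def
  proof (rule Max_eqI)
    show "finite ((\<lambda>B. int (card (S \<inter> B)) - int (card (bar_set S \<inter> B))) ` F)" using finF by simp
  next
    fix y assume "y \<in> (\<lambda>B. int (card (S \<inter> B)) - int (card (bar_set S \<inter> B))) ` F"
    then obtain B where B: "B \<in> F" "y = int (card (S \<inter> B)) - int (card (bar_set S \<inter> B))" by auto
    have "RT E T B \<in> RT E T ` F" using B by simp
    then have "dm (RT E T ` F) S \<le> card (S - RT E T B)" by (rule dm_le[OF finG])
    then show "y \<le> int (card S) - 2 * int (dm (RT E T ` F) S)" using ct[OF B(1)] B(2) by simp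
  next
    have eq: "int (card (S \<inter> B0)) - int (card (bar_set S \<inter> B0)) = int (card S) - 2 * int (dm (RT E T ` F) S)"
      using ct[OF B0(1)] B0' B0 by simp
    show "int (card S) - 2 * int (dm (RT E T ` F) S) \<in> (\<lambda>B. int (card (S \<inter> B)) - int (card (bar_set S \<inter> B))) ` F"
      by (rule image_eqI[where f="\<lambda>B. int (card (S \<inter> B)) - int (card (bar_set S \<inter> B))", OF eq[symmetric] B0(1)])
  qed
qed

lemma transv_abs:
  assumes pos: "T \<subseteq> {1..}" and S: "transv T S"
  shows "abs ` S = T" "inj_on abs S"
proof -
  show "abs ` S = T"
  proof (rule set_eqI, rule iffI)
    fix k assume "k \<in> abs ` S"
    then obtain x where x: "x \<in> S" "k = \<bar>x\<bar>" by auto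
    have "x \<in> T \<or> -x \<in> T" using transv_subD[OF S x(1)] .
    moreover have "x \<in> T \<Longrightarrow> \<bar>x\<bar> = x" "-x \<in> T \<Longrightarrow> \<bar>x\<bar> = -x" using pos by (auto simp: subset_eq)
    ultimately show "k \<in> T" using x by auto
  next
    fix k assume k: "k \<in> T"
    then have k1: "k \<ge> 1" using pos by auto
    have "k \<in> S \<or> -k \<in> S" using transv_memD[OF S k] by blast
    moreover have "\<bar>k\<bar> = k" "\<bar>-k\<bar> = k" using k1 by auto
    ultimately show "k \<in> abs ` S" by (metis image_eqI)
  qed
  show "inj_on abs S"
  proof (rule inj_onI)
    fix x y assume xy: "x \<in> S" "y \<in> S" "\<bar>x\<bar> = \<bar>y\<bar>"
    then have "x = y \<or> x = -y" by arith
    moreover have "x \<in> T \<or> -x \<in> T" using transv_subD[OF S xy(1)] .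
    moreover have "x = -y \<Longrightarrow> x \<in> T \<Longrightarrow> False" using transv_memD[OF S, of x] xy by auto
    moreover have "x = -y \<Longrightarrow> -x \<in> T \<Longrightarrow> False" using transv_memD[OF S, of "-x"] xy by auto
    ultimately show "x = y" by blast
  qed
qed

lemma transv_card: "T \<subseteq> {1..} \<Longrightarrow> transv T S \<Longrightarrow> card S = card T"
  using transv_abs card_image by metis

lemma adm_unsigned:
  assumes pos: "E \<subseteq> {1..}" and T: "T \<subseteq> E"
  shows "(admissible E S \<and> unsigned S = T) \<longleftrightarrow> transv T S"
proof
  assume a: "admissible E S \<and> unsigned S = T"
  then have sub: "S \<subseteq> E \<union> bar_set E" and na: "\<And>i. \<not> (i \<in> S \<and> -i \<in> S)" and u: "abs ` S = T"
    unfolding admissible_def unsigned_def by auto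
  show "transv T S"
  proof (rule transv_I)
    fix x assume x: "x \<in> S"
    then have "x \<in> E \<or> -x \<in> E" using sub bar_mem by blast
    moreover have "x \<in> E \<Longrightarrow> \<bar>x\<bar> = x" "-x \<in> E \<Longrightarrow> \<bar>x\<bar> = -x" using pos by (auto simp: subset_eq)
    moreover have "\<bar>x\<bar> \<in> T" using u x by auto
    ultimately show "x \<in> T \<or> -x \<in> T" by auto
  next
    fix k assume k: "k \<in> T"
    then obtain x where x: "x \<in> S" "\<bar>x\<bar> = k" using u by auto
    then have "x = k \<or> x = -k" by arith
    then have "k \<in> S \<or> -k \<in> S" using x by auto
    then show "k \<in> S \<longleftrightarrow> -k \<notin> S" using na by blast
  qed
next
  assume S: "transv T S"
  have Tp: "T \<subseteq> {1..}" using pos T by auto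
  have "S \<subseteq> E \<union> bar_set E"
  proof
    fix x assume "x \<in> S"
    then have "x \<in> T \<or> -x \<in> T" using transv_subD[OF S] by blast
    then show "x \<in> E \<union> bar_set E" using T bar_mem by auto
  qed
  moreover have "\<And>i. \<not> (i \<in> S \<and> -i \<in> S)"
  proof
    fix i assume i: "i \<in> S \<and> -i \<in> S"
    then have "i \<in> T \<or> -i \<in> T" using transv_subD[OF S] by blast
    then show False using i transv_memD[OF S, of i] transv_memD[OF S, of "-i"] by auto
  qed
  ultimately have "admissible E S" unfolding admissible_def by blast
  moreover have "unsigned S = T" unfolding unsigned_def using transv_abs[OF Tp S] by simp
  ultimately show "admissible E S \<and> unsigned S = T" by blast
qed

lemma flip2_ii: "(B - {i, - i}) \<union> ({i, - i} - B) = flip2 B i i"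
  unfolding flip2_def by simp

lemma active_iff_act:
  assumes PX: "PX T G" and tr: "\<forall>B\<in>G. transv T B" and pos: "T \<subseteq> {1..}" and B: "B \<in> G" and i: "i \<in> T"
  shows "active T G B i \<longleftrightarrow> act T G B i"
proof -
  have ag: "\<And>k j. k \<in> T \<Longrightarrow> j \<in> T \<Longrightarrow> j \<le> i \<Longrightarrow> i < k \<Longrightarrow> (k \<in> flip2 B i j \<longleftrightarrow> k \<in> B)"
  proof -
    fix k j assume a: "k \<in> T" "j \<in> T" "j \<le> i" "i < k"
    have "k \<ge> 1" "j \<ge> 1" "i \<ge> 1" using a i pos by auto
    then have "k \<notin> {i,j,-i,-j}" using a by auto
    then show "k \<in> flip2 B i j \<longleftrightarrow> k \<in> B" unfolding mem_flip2 by blast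
  qed
  have ati: "\<And>j. i \<in> flip2 B i j \<longleftrightarrow> i \<notin> B" unfolding mem_flip2 by auto
  have A: "active T G B i \<longleftrightarrow> flip2 B i i \<notin> G \<and> \<not> (\<exists>j\<in>T. j < i \<and> flip2 B i j \<in> G)"
    unfolding active_def orientable_def flip2_ii using i by (simp add: flip2_def)
  show ?thesis
  proof
    assume act: "active T G B i"
    show "act T G B i" unfolding act_def
    proof (intro ballI impI)
      fix B' assume B': "B' \<in> G" and agr: "\<forall>k\<in>T. i < k \<longrightarrow> (k \<in> B' \<longleftrightarrow> k \<in> B)"
      show "i \<in> B' \<longleftrightarrow> i \<in> B"
      proof (rule ccontr)
        assume "\<not> (i \<in> B' \<longleftrightarrow> i \<in> B)"
        then have d: "i \<in> B \<longleftrightarrow> i \<notin> B'" by blast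
        obtain j where j: "j \<in> T" "j \<in> B \<longleftrightarrow> j \<notin> B'" "flip2 B i j \<in> G"
          using PX B B' i d unfolding PX_def by blast
        have "\<not> i < j" using agr j(1,2) by blast
        moreover have "j \<noteq> i" using A act j(3) by blast
        moreover have "\<not> j < i" using A act j(1,3) by blast
        ultimately show False by simp
      qed
    qed
  next
    assume act: "act T G B i"
    have no: "\<And>j. j \<in> T \<Longrightarrow> j \<le> i \<Longrightarrow> flip2 B i j \<notin> G"
    proof
      fix j assume j: "j \<in> T" "j \<le> i" "flip2 B i j \<in> G"
      have "\<forall>k\<in>T. i < k \<longrightarrow> (k \<in> flip2 B i j \<longleftrightarrow> k \<in> B)" using ag j by blast
      then have "i \<in> flip2 B i j \<longleftrightarrow> i \<in> B" using act j(3) unfolding act_def by blast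
      then show False using ati by blast
    qed
    show "active T G B i" unfolding A using no i by force
  qed
qed

lemma lookup_scaleR_pm: "Poly_Mapping.lookup (r *\<^sub>R (x :: nat \<Rightarrow>\<^sub>0 real)) i = r * Poly_Mapping.lookup x i"
proof -
  have sub: "{i. r *\<^sub>R Poly_Mapping.lookup x i \<noteq> 0} \<subseteq> {k. Poly_Mapping.lookup x k \<noteq> 0}" by auto
  have fin: "finite {i. r *\<^sub>R Poly_Mapping.lookup x i \<noteq> 0}" by (rule finite_subset[OF sub finite_lookup])
  have "Poly_Mapping.lookup (Abs_poly_mapping (\<lambda>i. r *\<^sub>R Poly_Mapping.lookup x i)) = (\<lambda>i. r *\<^sub>R Poly_Mapping.lookup x i)"
    by (rule lookup_Abs_poly_mapping[OF fin])
  then have "Poly_Mapping.lookup (r *\<^sub>R x) = (\<lambda>i. r *\<^sub>R Poly_Mapping.lookup x i)" unfolding scaleR_poly_mapping_def .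
  then show ?thesis by simp
qed

lemma sum_lin:
  fixes L :: "'a::real_vector \<Rightarrow> real"
  assumes add: "\<And>x y. L (x + y) = L x + L y" and sc: "\<And>c x. L (c *\<^sub>R x) = c * L x" and fin: "finite V"
  shows "L (\<Sum>x\<in>V. u x *\<^sub>R x) = (\<Sum>x\<in>V. u x * L x)"
  using fin
proof (induction V rule: finite_induct)
  case empty
  show ?case using sc[of 0 0] by simp
next
  case (insert a V)
  then show ?case using add sc by simp
qed

lemma seg_face:
  fixes V :: "'a::real_vector set" and L :: "'a \<Rightarrow> real"
  assumes fin: "finite V" and add: "\<And>x y. L (x + y) = L x + L y" and sc: "\<And>c x. L (c *\<^sub>R x) = c * L x"
   and x0: "x0 \<in> V" and y0: "y0 \<in> V" and ne: "x0 \<noteq> y0"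
   and le: "\<And>v. v \<in> V \<Longrightarrow> L v \<le> M" and ex: "L x0 = M" "L y0 = M"
   and lt: "\<And>v. v \<in> V \<Longrightarrow> v \<noteq> x0 \<Longrightarrow> v \<noteq> y0 \<Longrightarrow> L v < M"
  shows "closed_segment x0 y0 face_of convex hull V"
proof -
  have hull_le: "convex hull V \<subseteq> {p. L p \<le> M}"
  proof (rule hull_minimal)
    show "V \<subseteq> {p. L p \<le> M}" using le by auto
    show "convex {p. L p \<le> M}"
    proof (rule convexI)
      fix x y and s t :: real assume x: "x \<in> {p. L p \<le> M}" and y: "y \<in> {p. L p \<le> M}" and st0: "0 \<le> s" "0 \<le> t" "s + t = 1"
      have st: "0 \<le> s \<and> 0 \<le> t \<and> s + t = 1" using st0 by simp
      have "s * L x \<le> s * M" using x st by (simp add: mult_left_mono)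
      moreover have "t * L y \<le> t * M" using y st by (simp add: mult_left_mono)
      ultimately have "s * L x + t * L y \<le> (s + t) * M" by (simp add: distrib_right)
      then show "s *\<^sub>R x + t *\<^sub>R y \<in> {p. L p \<le> M}" using st add sc by simp
    qed
  qed
  have seg_L: "L p = M" if p: "p \<in> closed_segment x0 y0" for p
  proof -
    obtain t where t: "p = (1 - t) *\<^sub>R x0 + t *\<^sub>R y0" using p unfolding in_segment by blast
    have "L p = (1 - t) * M + t * M" unfolding t add sc ex ..
    then show ?thesis by (simp add: algebra_simps)
  qed
  have eqset: "p \<in> closed_segment x0 y0" if p: "p \<in> convex hull V" and Lp: "L p = M" for p
  proof -
    obtain u where u: "\<forall>x\<in>V. 0 \<le> u x" "sum u V = 1" "(\<Sum>x\<in>V. u x *\<^sub>R x) = p"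
      using p unfolding convex_hull_finite[OF fin] by blast
    have a1: "L p = (\<Sum>x\<in>V. u x * L x)" unfolding u(3)[symmetric] by (rule sum_lin[OF add sc fin])
    have a2: "(\<Sum>x\<in>V. u x * M) = M" using u(2) by (simp add: sum_distrib_right[symmetric])
    have e1: "(\<Sum>x\<in>V. u x * (M - L x)) = (\<Sum>x\<in>V. u x * M) - (\<Sum>x\<in>V. u x * L x)"
      by (simp add: right_diff_distrib sum_subtractf)
    have s0: "(\<Sum>x\<in>V. u x * (M - L x)) = 0" using e1 a1 a2 Lp by linarith
    have nn: "\<And>x. x \<in> V \<Longrightarrow> 0 \<le> u x * (M - L x)"
    proof -
      fix x assume x: "x \<in> V"
      have "0 \<le> u x" "0 \<le> M - L x" using u(1) le[OF x] x by auto
      then show "0 \<le> u x * (M - L x)" by (rule mult_nonneg_nonneg)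
    qed
    have z: "\<forall>x\<in>V. u x * (M - L x) = 0" using sum_nonneg_eq_0_iff[OF fin nn] s0 by simp
    have z2: "\<forall>x\<in>V - {x0, y0}. u x = 0"
    proof
      fix x assume x: "x \<in> V - {x0, y0}"
      then have "M - L x > 0" using lt by auto
      then show "u x = 0" using z x by auto
    qed
    have sub: "{x0, y0} \<subseteq> V" using x0 y0 by auto
    have s1: "sum u V = sum u {x0, y0}"
      by (rule sum.mono_neutral_right[OF fin sub]) (use z2 in auto)
    have s2: "(\<Sum>x\<in>V. u x *\<^sub>R x) = (\<Sum>x\<in>{x0,y0}. u x *\<^sub>R x)"
      by (rule sum.mono_neutral_right[OF fin sub]) (use z2 in auto)
    have su: "u x0 + u y0 = 1" using s1 u(2) ne by simp
    have pe: "p = u x0 *\<^sub>R x0 + u y0 *\<^sub>R y0" using s2 u(3) ne by simp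
    have nn0: "0 \<le> u x0" "0 \<le> u y0" using u(1) x0 y0 by auto
    have ux: "u x0 = 1 - u y0" using su by simp
    have pe2: "p = (1 - u y0) *\<^sub>R x0 + u y0 *\<^sub>R y0" using pe unfolding ux .
    have "u y0 \<le> 1" using su nn0 by simp
    then show ?thesis unfolding in_segment using pe2 nn0 by blast
  qed
  have seg_sub: "closed_segment x0 y0 \<subseteq> convex hull V"
    by (rule closed_segment_subset) (use x0 y0 hull_subset[of V convex] in auto)
  show ?thesis unfolding face_of_def
  proof (intro conjI)
    show "closed_segment x0 y0 \<subseteq> convex hull V" by (rule seg_sub)
    show "convex (closed_segment x0 y0)" by simp
  next
    show "\<forall>a\<in>convex hull V. \<forall>b\<in>convex hull V. \<forall>x\<in>closed_segment x0 y0. x \<in> open_segment a b \<longrightarrow> a \<in> closed_segment x0 y0 \<and> b \<in> closed_segment x0 y0"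
    proof (intro ballI impI)
    fix a b x assume a: "a \<in> convex hull V" and b: "b \<in> convex hull V" and x: "x \<in> closed_segment x0 y0"
      and xo: "x \<in> open_segment a b"
    obtain t where t: "0 < t" "t < 1" "x = (1 - t) *\<^sub>R a + t *\<^sub>R b" using xo unfolding in_segment by blast
    have La: "L a \<le> M" and Lb: "L b \<le> M" using a b hull_le by auto
    have "M = (1 - t) * L a + t * L b" using seg_L[OF x] t(3) add sc by simp
    then have "(1 - t) * (M - L a) + t * (M - L b) = 0" by (simp add: algebra_simps)
    moreover have "(1 - t) * (M - L a) \<ge> 0" "t * (M - L b) \<ge> 0" using t La Lb by auto
    ultimately have "(1 - t) * (M - L a) = 0" "t * (M - L b) = 0" by linarith+
    then have "L a = M" "L b = M" using t by auto
    then show "a \<in> closed_segment x0 y0 \<and> b \<in> closed_segment x0 y0" using eqset a b by blast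
    qed
  qed
qed

abbreviation lk :: "(nat \<Rightarrow>\<^sub>0 real) \<Rightarrow> nat \<Rightarrow> real" where "lk \<equiv> Poly_Mapping.lookup"

lemma lk_evec1: "lk (evec1 a) j = of_int (sgn a) * (if nat \<bar>a\<bar> = j then 1 else 0)"
  unfolding evec1_def lookup_scaleR_pm lookup_single by (simp add: when_def)

lemma lk_unit: "lk (unit_dir i) j = (if nat i = j then 1 else 0)"
  unfolding unit_dir_def lookup_single by (simp add: when_def)

lemma lk_evec:
  assumes B: "transv E B" and pos: "E \<subseteq> {1..}" and fin: "finite E" and k: "k \<in> E"
  shows "lk (evec B) (nat k) = (if k \<in> B then 1 else -1)"
proof -
  have finB: "finite B" by (rule transv_finite[OF fin B])
  have k1: "k \<ge> 1" using k pos by auto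
  let ?f = "\<lambda>a. of_int (sgn a) * (if nat \<bar>a\<bar> = nat k then 1 else 0) :: real"
  have "lk (evec B) (nat k) = (\<Sum>a\<in>B. ?f a)" unfolding evec_def lookup_sum lk_evec1 ..
  also have "\<dots> = (\<Sum>a\<in>B \<inter> {k, -k}. ?f a)"
  proof (rule sum.mono_neutral_right[OF finB])
    show "B \<inter> {k, -k} \<subseteq> B" by blast
    show "\<forall>a\<in>B - B \<inter> {k, - k}. ?f a = 0"
    proof
      fix a assume a: "a \<in> B - B \<inter> {k, -k}"
      then have "a \<noteq> k" "a \<noteq> -k" by auto
      then have "\<bar>a\<bar> \<noteq> k" by arith
      then have "nat \<bar>a\<bar> \<noteq> nat k" using k1 by simp
      then show "?f a = 0" by simp
    qed
  qed
  also have "\<dots> = (if k \<in> B then 1 else -1)"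
  proof (cases "k \<in> B")
    case True
    then have "-k \<notin> B" using transv_memD[OF B k] by blast
    then have e: "B \<inter> {k, -k} = {k}" using True by blast
    show ?thesis unfolding e using True k1 by simp
  next
    case False
    then have "-k \<in> B" using transv_memD[OF B k] by blast
    then have e: "B \<inter> {k, -k} = {-k}" using False by blast
    show ?thesis unfolding e using False k1 by simp
  qed
  finally show ?thesis .
qed

lemma transv_eqI:
  assumes "transv E B" "transv E B'" "\<And>k. k \<in> E \<Longrightarrow> k \<in> B \<longleftrightarrow> k \<in> B'"
  shows "B = B'"
proof (rule set_eqI)
  fix x
  show "x \<in> B \<longleftrightarrow> x \<in> B'"
  proof (cases "x \<in> E")
    case True then show ?thesis using assms(3) by blast
  next
    case False
    show ?thesis
    proof (cases "-x \<in> E")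
      case True
      have "-x \<in> B \<longleftrightarrow> -x \<in> B'" using assms(3)[OF True] .
      moreover have "-x \<in> B \<longleftrightarrow> x \<notin> B" using transv_memD[OF assms(1) True] by simp
      moreover have "-x \<in> B' \<longleftrightarrow> x \<notin> B'" using transv_memD[OF assms(2) True] by simp
      ultimately show ?thesis by blast
    next
      case False2: False
      have "x \<notin> B" using transv_subD[OF assms(1)] False False2 by blast
      moreover have "x \<notin> B'" using transv_subD[OF assms(2)] False False2 by blast
      ultimately show ?thesis by blast
    qed
  qed
qed

lemma dm_PX:
  assumes dm: "delta_matroid E F"
  shows "PX E F"
  unfolding PX_def
proof (intro ballI impI)
  fix B1 B2 i assume B1: "B1 \<in> F" and B2: "B2 \<in> F" and iE: "i \<in> E" and d: "i \<in> B1 \<longleftrightarrow> i \<notin> B2"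
  have finE: "finite E" and posE: "E \<subseteq> {1..}" and adm: "\<forall>B\<in>F. admissible E B \<and> card B = card E"
    and edge: "\<forall>x y. x \<noteq> y \<and> closed_segment x y face_of convex hull (evec ` F) \<longrightarrow> allowed_direction E (y - x)"
  proof -
    note D5 = dm[unfolded delta_matroid_def]
    show "finite E" by (rule conjunct1[OF D5])
    show "E \<subseteq> {1..}" by (rule conjunct1[OF conjunct2[OF D5]])
    show "\<forall>B\<in>F. admissible E B \<and> card B = card E" by (rule conjunct1[OF conjunct2[OF conjunct2[OF conjunct2[OF D5]]]])
    show "\<forall>x y. x \<noteq> y \<and> closed_segment x y face_of convex hull (evec ` F) \<longrightarrow> allowed_direction E (y - x)"
      by (rule conjunct2[OF conjunct2[OF conjunct2[OF conjunct2[OF D5]]]])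
  qed
  have tr: "\<forall>B\<in>F. transv E B" using adm adm_card_transv finE posE by blast
  have finF: "finite F" by (rule finite_fam[OF finE tr])
  define Dif where "Dif B = {k\<in>E. k \<in> B1 \<longleftrightarrow> k \<notin> B}" for B
  have Dif_mem: "\<And>B k. k \<in> Dif B \<longleftrightarrow> k \<in> E \<and> (k \<in> B1 \<longleftrightarrow> k \<notin> B)" unfolding Dif_def by simp
  have Dif_sub: "\<And>B. Dif B \<subseteq> E" unfolding Dif_def by blast
  have finDif: "\<And>B. finite (Dif B)" using Dif_sub finE finite_subset by blast
  define P where "P B \<longleftrightarrow> B \<in> F \<and> Dif B \<subseteq> Dif B2 \<and> i \<in> Dif B" for B
  have PB2: "P B2" unfolding P_def using B2 iE d Dif_mem by blast
  obtain y where Py: "P y" and ymin: "\<And>B. P B \<Longrightarrow> card (Dif y) \<le> card (Dif B)"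
    using ex_has_least_nat[of P B2 "\<lambda>B. card (Dif B)"] PB2 by blast
  define D where "D = Dif y"
  have yF: "y \<in> F" and DD2: "D \<subseteq> Dif B2" and iD: "i \<in> D" using Py unfolding P_def D_def by auto
  have finD: "finite D" unfolding D_def by (rule finDif)
  have DE: "D \<subseteq> E" unfolding D_def by (rule Dif_sub)
  define K where "K = real (card D)"
  have "card D \<ge> 1" using iD finD by (metis One_nat_def Suc_leI card_gt_0_iff empty_iff)
  then have K1: "K \<ge> 1" unfolding K_def by simp
  define a where "a k = (if k \<notin> D then K else if k = i then 1 - K else 1)" for k
  define s where "s k = (if k \<in> B1 then 1 else -1 :: real)" for k
  define L where "L p = (\<Sum>k\<in>E. a k * s k * lk p (nat k))" for p
  have Ladd: "\<And>x y. L (x + y) = L x + L y" unfolding L_def lookup_add by (simp add: algebra_simps sum.distrib)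
  have Lsc: "\<And>c x. L (c *\<^sub>R x) = c * L x" unfolding L_def lookup_scaleR_pm by (simp add: sum_distrib_left algebra_simps)
  define W where "W B = (\<Sum>k\<in>Dif B. a k)" for B
  define M where "M = (\<Sum>k\<in>E. a k)"
  have Lev: "L (evec B) = M - 2 * W B" if B: "B \<in> F" for B
  proof -
    have t: "a k * s k * lk (evec B) (nat k) = a k - 2 * (if k \<in> Dif B then a k else 0)" if k: "k \<in> E" for k
    proof -
      have lkB: "lk (evec B) (nat k) = (if k\<in>B then 1 else -1)" using lk_evec[OF _ posE finE k] tr B by blast
      have dk: "k \<in> Dif B \<longleftrightarrow> (k \<in> B1 \<longleftrightarrow> k \<notin> B)" using Dif_mem k by blast
      show ?thesis unfolding lkB s_def using dk by (cases "k \<in> B"; cases "k \<in> B1") simp_all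
    qed
    have "L (evec B) = (\<Sum>k\<in>E. a k - 2 * (if k \<in> Dif B then a k else 0))"
      unfolding L_def by (rule sum.cong[OF refl]) (rule t)
    also have "\<dots> = M - 2 * (\<Sum>k\<in>E. if k \<in> Dif B then a k else 0)"
      unfolding M_def by (simp add: sum_subtractf sum_distrib_left)
    also have "(\<Sum>k\<in>E. if k \<in> Dif B then a k else 0) = W B"
    proof -
      have "(\<Sum>k\<in>E. if k \<in> Dif B then a k else 0) = (\<Sum>k\<in>E \<inter> Dif B. a k)"
        by (rule sum.inter_restrict[OF finE, symmetric])
      moreover have "E \<inter> Dif B = Dif B" using Dif_sub by blast
      ultimately show ?thesis unfolding W_def by simp
    qed
    finally show ?thesis .
  qed
  have Dif_B1: "Dif B1 = {}" using Dif_mem by blast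
  have W_B1: "W B1 = 0" unfolding W_def Dif_B1 by simp
  have WD: "W B = 0" if "Dif B = D" for B
  proof -
    have "W B = (\<Sum>k\<in>D. a k)" unfolding W_def that ..
    also have "\<dots> = a i + (\<Sum>k\<in>D - {i}. a k)" by (rule sum.remove[OF finD iD])
    also have "(\<Sum>k\<in>D - {i}. a k) = (\<Sum>k\<in>D - {i}. 1)" by (rule sum.cong[OF refl]) (simp add: a_def)
    also have "\<dots> = real (card D) - 1"
    proof -
      have c: "card (D - {i}) + 1 = card D" using finD iD \<open>card D \<ge> 1\<close> by (simp add: card_Diff_singleton)
      have "(\<Sum>k\<in>D - {i}. (1::real)) = real (card (D - {i}))" by simp
      also have "\<dots> = real (card D) - 1" using arg_cong[OF c, of real] by simp
      finally show ?thesis .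
    qed
    finally show ?thesis unfolding a_def K_def using iD by simp
  qed
  have a_lb: "a k \<ge> (if k = i then 1 - K else 0)" for k unfolding a_def using K1 iD by auto
  have Wpos: "W B > 0" if B: "B \<in> F" and ne1: "Dif B \<noteq> {}" and ne2: "Dif B \<noteq> D" for B
  proof (cases "Dif B \<subseteq> D")
    case True
    show ?thesis
    proof (cases "i \<in> Dif B")
      case True2: True
      have PB: "P B" unfolding P_def using B True True2 DD2 by blast
      have c1: "card D \<le> card (Dif B)" using ymin[OF PB] unfolding D_def .
      have c2: "card (Dif B) \<le> card D" by (rule card_mono[OF finD True])
      have "Dif B = D" by (rule card_subset_eq[OF finD True]) (use c1 c2 in linarith)
      then show ?thesis using ne2 by blast
    next
      case False
      have "W B = (\<Sum>k\<in>Dif B. 1)" unfolding W_def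
        by (rule sum.cong[OF refl]) (use True False in \<open>auto simp: a_def\<close>)
      also have "\<dots> = real (card (Dif B))" by simp
      finally show ?thesis using ne1 finDif[of B] by (simp add: card_gt_0_iff)
    qed
  next
    case False
    then obtain k0 where k0: "k0 \<in> Dif B" "k0 \<notin> D" by blast
    have "W B = a k0 + (\<Sum>k\<in>Dif B - {k0}. a k)" unfolding W_def by (rule sum.remove[OF finDif k0(1)])
    moreover have "a k0 = K" using k0 unfolding a_def by simp
    moreover have "(\<Sum>k\<in>Dif B - {k0}. a k) \<ge> (\<Sum>k\<in>Dif B - {k0}. (if k = i then 1 - K else 0))"
      by (rule sum_mono) (rule a_lb)
    moreover have "(\<Sum>k\<in>Dif B - {k0}. (if k = i then 1 - K else 0)) = (if i \<in> Dif B - {k0} then 1 - K else 0)"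
      using finDif[of B] by (simp add: sum.delta)
    moreover have "(if i \<in> Dif B - {k0} then 1 - K else 0) \<ge> 1 - K" using K1 by simp
    ultimately show ?thesis by linarith
  qed
  have eq_B1: "B = B1" if B: "B \<in> F" and "Dif B = {}" for B
    by (rule transv_eqI[of E]) (use tr B B1 Dif_mem that in blast)+
  have eq_y: "B = y" if B: "B \<in> F" and "Dif B = D" for B
  proof (rule transv_eqI[of E])
    show "transv E B" "transv E y" using tr B yF by blast+
    fix k assume k: "k \<in> E"
    have "k \<in> Dif B \<longleftrightarrow> k \<in> Dif y" using that unfolding D_def by simp
    then show "k \<in> B \<longleftrightarrow> k \<in> y" using Dif_mem[of k B] Dif_mem[of k y] k by blast
  qed
  have lkiB1: "lk (evec B1) (nat i) = (if i \<in> B1 then 1 else -1)" using lk_evec[OF _ posE finE iE] tr B1 by blast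
  have lkiy: "lk (evec y) (nat i) = (if i \<in> y then 1 else -1)" using lk_evec[OF _ posE finE iE] tr yF by blast
  have iy: "i \<in> B1 \<longleftrightarrow> i \<notin> y" using iD Dif_mem unfolding D_def by blast
  have ne: "evec B1 \<noteq> evec y"
  proof
    assume "evec B1 = evec y"
    then have "lk (evec B1) (nat i) = lk (evec y) (nat i)" by simp
    then show False unfolding lkiB1 lkiy using iy by (cases "i \<in> B1") simp_all
  qed
  have face: "closed_segment (evec B1) (evec y) face_of convex hull (evec ` F)"
  proof (rule seg_face[OF _ Ladd Lsc _ _ ne])
    show "finite (evec ` F)" using finF by simp
    show "evec B1 \<in> evec ` F" "evec y \<in> evec ` F" using B1 yF by auto
  next
    fix v assume "v \<in> evec ` F"
    then obtain B where B: "B \<in> F" "v = evec B" by auto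
    have "W B \<ge> 0"
    proof (cases "Dif B = {} \<or> Dif B = D")
      case True then show ?thesis using W_B1 WD unfolding W_def by auto
    next
      case False then show ?thesis using Wpos[OF B(1)] by force
    qed
    then show "L v \<le> M" using Lev[OF B(1)] B(2) by simp
  next
    show "L (evec B1) = M" using Lev[OF B1] W_B1 by simp
    show "L (evec y) = M" using Lev[OF yF] WD[of y] unfolding D_def by simp
  next
    fix v assume v: "v \<in> evec ` F" "v \<noteq> evec B1" "v \<noteq> evec y"
    then obtain B where B: "B \<in> F" "v = evec B" by auto
    have "Dif B \<noteq> {}" using eq_B1[OF B(1)] v B by blast
    moreover have "Dif B \<noteq> D" using eq_y[OF B(1)] v B by blast
    ultimately have "W B > 0" using Wpos[OF B(1)] by blast
    then show "L v < M" using Lev[OF B(1)] B(2) by simp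
  qed
  have allowed: "allowed_direction E (evec y - evec B1)" using edge face ne by blast
  have lkd: "lk (evec y - evec B1) (nat k) \<noteq> 0" if k: "k \<in> D" for k
  proof -
    have kE: "k \<in> E" using k DE by blast
    have "lk (evec y - evec B1) (nat k) = (if k \<in> y then 1 else -1) - (if k \<in> B1 then 1 else -1)"
      unfolding lookup_minus using lk_evec[OF _ posE finE kE] tr yF B1 by simp
    moreover have "k \<in> B1 \<longleftrightarrow> k \<notin> y" using k Dif_mem unfolding D_def by blast
    ultimately show ?thesis by (cases "k \<in> y") simp_all
  qed
  have natinj: "\<And>p q. p \<in> E \<Longrightarrow> q \<in> E \<Longrightarrow> nat p = nat q \<Longrightarrow> p = q"
  proof -
    fix p q assume "p \<in> E" "q \<in> E" "nat p = nat q"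
    moreover have "p \<ge> 1" "q \<ge> 1" using \<open>p \<in> E\<close> \<open>q \<in> E\<close> posE by auto
    ultimately show "p = q" by simp
  qed
  obtain j where jE: "j \<in> E" and Dij: "D \<subseteq> {i, j}"
  proof -
    from allowed[unfolded allowed_direction_def]
    show ?thesis
    proof (elim disjE exE bexE)
      fix c i0 assume i0: "i0 \<in> E" and eq: "evec y - evec B1 = c *\<^sub>R unit_dir i0"
      have "D \<subseteq> {i, i0}"
      proof
        fix k assume k: "k \<in> D"
        have "lk (c *\<^sub>R unit_dir i0) (nat k) \<noteq> 0" using lkd[OF k] unfolding eq .
        then have "nat i0 = nat k" unfolding lookup_scaleR_pm lk_unit by (cases "nat i0 = nat k") simp_all
        then have "i0 = k" using natinj i0 k DE by blast
        then show "k \<in> {i, i0}" by simp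
      qed
      then show ?thesis using that i0 by blast
    next
      fix c i0 j0 assume i0: "i0 \<in> E" and j0: "j0 \<in> E" and
        eq: "i0 \<noteq> j0 \<and> (evec y - evec B1 = c *\<^sub>R (unit_dir i0 + unit_dir j0) \<or> evec y - evec B1 = c *\<^sub>R (unit_dir i0 - unit_dir j0))"
      have D2: "D \<subseteq> {i0, j0}"
      proof
        fix k assume k: "k \<in> D"
        have kE: "k \<in> E" using k DE by blast
        have "nat i0 = nat k \<or> nat j0 = nat k"
        proof (rule ccontr)
          assume "\<not> (nat i0 = nat k \<or> nat j0 = nat k)"
          then have z1: "lk (unit_dir i0) (nat k) = 0" and z2: "lk (unit_dir j0) (nat k) = 0" unfolding lk_unit by auto
          have "evec y - evec B1 = c *\<^sub>R (unit_dir i0 + unit_dir j0) \<or> evec y - evec B1 = c *\<^sub>R (unit_dir i0 - unit_dir j0)"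
            using eq by blast
          then have "lk (evec y - evec B1) (nat k) = 0"
          proof (elim disjE)
            assume e: "evec y - evec B1 = c *\<^sub>R (unit_dir i0 + unit_dir j0)"
            show ?thesis unfolding e lookup_scaleR_pm lookup_add z1 z2 by simp
          next
            assume e: "evec y - evec B1 = c *\<^sub>R (unit_dir i0 - unit_dir j0)"
            show ?thesis unfolding e lookup_scaleR_pm lookup_minus z1 z2 by simp
          qed
          then show False using lkd[OF k] by blast
        qed
        then have "i0 = k \<or> j0 = k" using natinj i0 j0 kE by blast
        then show "k \<in> {i0, j0}" by blast
      qed
      show ?thesis
      proof (cases "i = i0")
        case True
        then have "D \<subseteq> {i, j0}" using D2 by blast
        then show ?thesis using that j0 by blast
      next
        case False
        then have "i = j0" using D2 iD by blast
        then have "D \<subseteq> {i, i0}" using D2 by blast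
        then show ?thesis using that i0 by blast
      qed
    qed
  qed
  define j' where "j' = (if j \<in> D then j else i)"
  have j'D: "j' \<in> D" unfolding j'_def using iD by simp
  have Dj': "D = {i, j'}"
  proof (cases "j \<in> D")
    case True then show ?thesis unfolding j'_def using Dij iD by auto
  next
    case False then show ?thesis unfolding j'_def using Dij iD by auto
  qed
  have j'E: "j' \<in> E" using j'D DE by blast
  have j'B2: "j' \<in> B1 \<longleftrightarrow> j' \<notin> B2" using j'D DD2 Dif_mem by blast
  have i1: "i \<ge> 1" "j' \<ge> 1" using iE j'E posE by auto
  have fl: "flip2 B1 i j' = y"
  proof (rule set_eqI)
    fix x
    have trB1: "transv E B1" and trY: "transv E y" using tr B1 yF by blast+
    show "x \<in> flip2 B1 i j' \<longleftrightarrow> x \<in> y"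
    proof (cases "x \<in> E")
      case True
      then have x1: "x \<ge> 1" using posE by auto
      have "x \<in> {i, j', -i, -j'} \<longleftrightarrow> x \<in> D" unfolding Dj' using x1 i1 by auto
      moreover have "x \<in> D \<longleftrightarrow> (x \<in> B1 \<longleftrightarrow> x \<notin> y)" using Dif_mem True unfolding D_def by blast
      ultimately show ?thesis unfolding mem_flip2 by blast
    next
      case False
      show ?thesis
      proof (cases "-x \<in> E")
        case True
        then have x1: "-x \<ge> 1" using posE by auto
        have "x \<in> {i, j', -i, -j'} \<longleftrightarrow> -x \<in> D" unfolding Dj' using x1 i1 by auto
        moreover have "-x \<in> D \<longleftrightarrow> (-x \<in> B1 \<longleftrightarrow> -x \<notin> y)" using Dif_mem True unfolding D_def by blast
        moreover have "-x \<in> B1 \<longleftrightarrow> - (-x) \<notin> B1" using transv_memD[OF trB1 True] .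
        moreover have "-x \<in> y \<longleftrightarrow> - (-x) \<notin> y" using transv_memD[OF trY True] .
        ultimately show ?thesis unfolding mem_flip2 by auto
      next
        case False2: False
        have "x \<notin> B1" using transv_subD[OF trB1] False False2 by blast
        moreover have "x \<notin> y" using transv_subD[OF trY] False False2 by blast
        moreover have "x \<notin> {i, j', -i, -j'}" using False False2 iE j'E by auto
        ultimately show ?thesis unfolding mem_flip2 by blast
      qed
    qed
  qed
  show "\<exists>j\<in>E. (j \<in> B1 \<longleftrightarrow> j \<notin> B2) \<and> flip2 B1 i j \<in> F"
    using j'E j'B2 fl yF by blast
qed


theorem theorem3p8:
  fixes n :: nat and \<F> :: "int set set" and u v :: "'a::comm_ring_1"
  assumes "delta_matroid {1..int n} \<F>"
  shows "U_poly n \<F> u (v - 1) =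
           (\<Sum>I\<in>{I. independent n \<F> I}. u ^ (n - card I) * v ^ a_count n \<F> I)"
proof -
  define E where "E = {1..int n}"
  have dm: "delta_matroid E \<F>" using assms unfolding E_def .
  have finE: "finite E" and posE: "E \<subseteq> {1..}" unfolding E_def by auto
  have Fne: "\<F> \<noteq> {}" using dm unfolding delta_matroid_def by blast
  have tr: "\<forall>B\<in>\<F>. transv E B"
  proof
    fix B assume "B \<in> \<F>"
    then have "admissible E B" "card B = card E" using dm unfolding delta_matroid_def by blast+
    then show "transv E B" using adm_card_transv finE posE by blast
  qed
  have PXE: "PX E \<F>" by (rule dm_PX[OF dm])
  define FT where "FT T = RT E T ` \<F>" for T
  have Tfacts: "finite T \<and> T \<subseteq> {1..} \<and> FT T \<noteq> {} \<and> (\<forall>B\<in>FT T. transv T B) \<and> PX T (FT T)"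
    if T: "T \<subseteq> E" for T
  proof -
    have "finite T" using finE T finite_subset by blast
    moreover have "T \<subseteq> {1..}" using T posE by blast
    moreover have "FT T \<noteq> {}" unfolding FT_def using Fne by blast
    moreover have "\<forall>B\<in>FT T. transv T B" unfolding FT_def using RT_transv[OF _ T posE] tr by blast
    moreover have "PX T (FT T)" unfolding FT_def by (rule PX_proj[OF PXE tr T posE])
    ultimately show ?thesis by blast
  qed
  have core_T: "LHS T (FT T) v = RHS T (FT T) v" if T: "T \<subseteq> E" for T
    using core[of T "FT T" v] Tfacts[OF T] by blast
  have AdS_eq: "AdS n = {S. admissible E S}" unfolding AdS_def E_def by simp
  have finAdS: "finite (AdS n)"
  proof -
    have "AdS n \<subseteq> Pow (E \<union> bar_set E)" unfolding AdS_eq admissible_def by auto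
    moreover have "finite (Pow (E \<union> bar_set E))" using finE unfolding bar_set_def by simp
    ultimately show ?thesis by (rule finite_subset)
  qed
  have uns_sub: "unsigned ` AdS n \<subseteq> Pow E"
  proof
    fix T assume "T \<in> unsigned ` AdS n"
    then obtain S where S: "admissible E S" "T = unsigned S" unfolding AdS_eq by auto
    have "abs ` S \<subseteq> E"
    proof
      fix k assume "k \<in> abs ` S"
      then obtain x where x: "x \<in> S" "k = \<bar>x\<bar>" by auto
      then have "x \<in> E \<or> -x \<in> E" using S(1) bar_mem unfolding admissible_def by blast
      moreover have "x \<in> E \<Longrightarrow> \<bar>x\<bar> = x" "-x \<in> E \<Longrightarrow> \<bar>x\<bar> = -x" using posE by (auto simp: subset_eq)
      ultimately show "k \<in> E" using x by auto
    qed
    then show "T \<in> Pow E" using S unfolding unsigned_def by simp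
  qed
  have fib: "{S \<in> AdS n. unsigned S = T} = {S. transv T S}" if T: "T \<subseteq> E" for T
    using adm_unsigned[OF posE T] unfolding AdS_eq by auto
  let ?h = "\<lambda>S. u ^ (n - card S) * (v - 1) ^ nat ((int (card S) - rank_g \<F> S) div 2)"
  have hS: "?h S = u ^ (n - card T) * (v - 1) ^ dm (FT T) S" if T: "T \<subseteq> E" and S: "transv T S" for T S
  proof -
    have Tp: "T \<subseteq> {1..}" using T posE by blast
    have c: "card S = card T" by (rule transv_card[OF Tp S])
    have r: "rank_g \<F> S = int (card S) - 2 * int (dm (FT T) S)"
      unfolding FT_def by (rule rank_eq[OF finE posE Fne tr T S])
    have "nat ((int (card S) - rank_g \<F> S) div 2) = dm (FT T) S" unfolding r by simp
    then show ?thesis using c by simp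
  qed
  have LHSeq: "U_poly n \<F> u (v - 1) = (\<Sum>T\<in>Pow E. u ^ (n - card T) * LHS T (FT T) v)"
  proof -
    have "U_poly n \<F> u (v - 1) = (\<Sum>S\<in>AdS n. ?h S)" unfolding U_poly_def ..
    also have "\<dots> = (\<Sum>T\<in>Pow E. \<Sum>S\<in>{S \<in> AdS n. unsigned S = T}. ?h S)"
      by (rule sum.group[symmetric, OF finAdS _ uns_sub]) (use finE in simp)
    also have "\<dots> = (\<Sum>T\<in>Pow E. u ^ (n - card T) * LHS T (FT T) v)"
    proof (rule sum.cong[OF refl])
      fix T assume "T \<in> Pow E"
      then have T: "T \<subseteq> E" by simp
      show "(\<Sum>S\<in>{S \<in> AdS n. unsigned S = T}. ?h S) = u ^ (n - card T) * LHS T (FT T) v"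
        unfolding fib[OF T] LHS_def sum_distrib_left
        by (rule sum.cong[OF refl]) (use hS[OF T] in simp)
    qed
    finally show ?thesis .
  qed
  have finInd: "finite {I. independent n \<F> I}"
    using finAdS by (rule finite_subset[rotated]) (auto simp: independent_def)
  have ind_sub: "unsigned ` {I. independent n \<F> I} \<subseteq> Pow E"
    using uns_sub unfolding independent_def by auto
  have ind_fib: "{I \<in> {I. independent n \<F> I}. unsigned I = T} = FT T" if T: "T \<subseteq> E" for T
  proof (rule set_eqI, rule iffI)
    fix I assume "I \<in> {I \<in> {I. independent n \<F> I}. unsigned I = T}"
    then have I: "I \<in> AdS n" "rank_g \<F> I = int (card I)" "unsigned I = T" unfolding independent_def by auto
    have It: "transv T I" using fib[OF T] I by auto
    have r: "rank_g \<F> I = int (card I) - 2 * int (dm (FT T) I)"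
      unfolding FT_def by (rule rank_eq[OF finE posE Fne tr T It])
    have d0: "dm (FT T) I = 0" using r I(2) by simp
    have TF: "finite T" "FT T \<noteq> {}" "\<forall>B\<in>FT T. transv T B" using Tfacts[OF T] by auto
    have finFT: "finite (FT T)" using finite_fam[OF TF(1) TF(3)] .
    obtain B' where B': "B' \<in> FT T" "dm (FT T) I = card (I - B')" using dm_ex[OF finFT TF(2)] by blast
    have "finite I" using transv_finite[OF TF(1) It] .
    then have "I \<subseteq> B'" using B' d0 by auto
    then have "I = B'" using transv_sub_eq[OF It] TF(3) B'(1) by blast
    then show "I \<in> FT T" using B' by simp
  next
    fix I assume I: "I \<in> FT T"
    have TF: "finite T" "FT T \<noteq> {}" "\<forall>B\<in>FT T. transv T B" using Tfacts[OF T] by auto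
    have It: "transv T I" using TF(3) I by blast
    have finFT: "finite (FT T)" using finite_fam[OF TF(1) TF(3)] .
    have "dm (FT T) I \<le> card (I - I)" by (rule dm_le[OF finFT I])
    then have d0: "dm (FT T) I = 0" by simp
    have r: "rank_g \<F> I = int (card I) - 2 * int (dm (FT T) I)"
      unfolding FT_def by (rule rank_eq[OF finE posE Fne tr T It])
    have "I \<in> {S \<in> AdS n. unsigned S = T}" using fib[OF T] It by simp
    then show "I \<in> {I \<in> {I. independent n \<F> I}. unsigned I = T}"
      unfolding independent_def using r d0 by simp
  qed
  have kI: "u ^ (n - card I) * v ^ a_count n \<F> I = u ^ (n - card T) * v ^ card {i\<in>T. act T (FT T) I i}"
    if T: "T \<subseteq> E" and I: "I \<in> FT T" for T I
  proof -
    have TF: "finite T" "T \<subseteq> {1..}" "\<forall>B\<in>FT T. transv T B" "PX T (FT T)" using Tfacts[OF T] by auto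
    have It: "transv T I" using TF(3) I by blast
    have u: "unsigned I = T" using adm_unsigned[OF posE T] It by blast
    have c: "card I = card T" by (rule transv_card[OF TF(2) It])
    have ee: "{1..int n} - ({1..int n} - T) = T" using T unfolding E_def by blast
    have pf: "proj_feas \<F> ({1..int n} - T) = FT T" unfolding FT_def E_def[symmetric] proj_RT ..
    have "{i \<in> T. active T (FT T) I i} = {i \<in> T. act T (FT T) I i}"
      using active_iff_act[OF TF(4) TF(3) TF(2) I] by blast
    then have "a_count n \<F> I = card {i\<in>T. act T (FT T) I i}"
      unfolding a_count_def u ee pf by simp
    then show ?thesis using c by simp
  qed
  have RHSeq: "(\<Sum>I\<in>{I. independent n \<F> I}. u ^ (n - card I) * v ^ a_count n \<F> I)
      = (\<Sum>T\<in>Pow E. u ^ (n - card T) * RHS T (FT T) v)"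
  proof -
    have "(\<Sum>I\<in>{I. independent n \<F> I}. u ^ (n - card I) * v ^ a_count n \<F> I)
        = (\<Sum>T\<in>Pow E. \<Sum>I\<in>{I \<in> {I. independent n \<F> I}. unsigned I = T}. u ^ (n - card I) * v ^ a_count n \<F> I)"
      by (rule sum.group[symmetric, OF finInd _ ind_sub]) (use finE in simp)
    also have "\<dots> = (\<Sum>T\<in>Pow E. u ^ (n - card T) * RHS T (FT T) v)"
    proof (rule sum.cong[OF refl])
      fix T assume "T \<in> Pow E"
      then have T: "T \<subseteq> E" by simp
      show "(\<Sum>I\<in>{I \<in> {I. independent n \<F> I}. unsigned I = T}. u ^ (n - card I) * v ^ a_count n \<F> I)
          = u ^ (n - card T) * RHS T (FT T) v"
        unfolding ind_fib[OF T] RHS_def sum_distrib_left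
        by (rule sum.cong[OF refl]) (use kI[OF T] in simp)
    qed
    finally show ?thesis .
  qed
  show ?thesis unfolding LHSeq RHSeq using core_T by (intro sum.cong[OF refl]) simp
qed

end
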